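(* Let $F$ be an algebraically closed field of characteristic different from $2$ and $3$, and let $K_{10}=F\cdot 1\oplus(K_3\otimes K_3)$ be the Kac Jordan superalgebra in the realization described in the context. Let $\varphi\colon K_{10}\to K_{10}$ be the automorphism $\varphi(\lambda 1+a\otimes b)=\lambda 1+(-1)^{\bar a\bar b}\,b\otimes a$ (for $\lambda\in F$ and homogeneous $a,b\in K_3$, extended linearly). Then the maximal subalgebras of $K_{10}$ are, up to conjugation by automorphisms of $K_{10}$, the following: (i) $(K_{10})_{\bar 0}$; (ii) the subalgebra of elements fixed by $\varphi$; (iii) the subalgebra $F\cdot 1\oplus(M\otimes K_3)$, where $M=Fe+Fx$ (a maximal subalgebra of $K_3$); (iv) the subalgebra $F\cdot 1+F(e\otimes e)+(x\otimes K_3)+(K_3\otimes y)$.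
   Context: The Kaplansky superalgebra $K_3$ has even part $Fe$ and odd part $Fx+Fy$, with products $e^2=e$, $ex=xe=\tfrac12x$, $ey=ye=\tfrac12y$, $xy=e$, $yx=-e$, $x^2=y^2=0$. It carries the supersymmetric bilinear form with $(e|e)=\tfrac12$, $(x|y)=1$, $(y|x)=-1$, $(x|x)=(y|y)=0$, and even and odd parts orthogonal. $K_{10}=F\cdot1\oplus(K_3\otimes K_3)$ is the superalgebra in which $1$ is an even identity element, $a\otimes b$ (for homogeneous $a,b\in K_3$) has parity $\bar a+\bar b$, and $(a\otimes b)(c\otimes d)=(-1)^{\bar b\bar c}\bigl(ac\otimes bd-\tfrac34(a|c)(b|d)1\bigr)$; this is (isomorphic to) the $10$-dimensional Kac Jordan superalgebra. Subalgebras are graded subalgebras; maximal means proper and maximal under inclusion; automorphisms are grading-preserving. *)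

theory Defs
  imports Main "HOL-Computational_Algebra.Polynomial"
begin

definition alg_closed :: "'a::field itself \<Rightarrow> bool" where
  "alg_closed t \<longleftrightarrow> (\<forall>p::'a poly. degree p > 0 \<longrightarrow> (\<exists>x. poly p x = 0))"

datatype k3 = E | X | Y

instance k3 :: finite
proof
  have "UNIV = {E, X, Y}" using k3.exhaust by auto
  then show "finite (UNIV :: k3 set)" by (metis finite.emptyI finite_insert)
qed

text \<open>Parity of basis vectors of K3 (True = odd).\<close>
fun par3 :: "k3 \<Rightarrow> bool" where
  "par3 E = False" | "par3 X = True" | "par3 Y = True"

text \<open>Elements of K3 are coefficient vectors k3 => F. Product of basis vectors.\<close>
definition unit3 :: "k3 \<Rightarrow> k3 \<Rightarrow> 'a::field" where
  "unit3 a = (\<lambda>k. if k = a then 1 else 0)"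

fun mul3 :: "k3 \<Rightarrow> k3 \<Rightarrow> k3 \<Rightarrow> 'a::field" where
  "mul3 E E = unit3 E"
| "mul3 E X = (\<lambda>k. (1/2) * unit3 X k)"
| "mul3 X E = (\<lambda>k. (1/2) * unit3 X k)"
| "mul3 E Y = (\<lambda>k. (1/2) * unit3 Y k)"
| "mul3 Y E = (\<lambda>k. (1/2) * unit3 Y k)"
| "mul3 X Y = unit3 E"
| "mul3 Y X = (\<lambda>k. - unit3 E k)"
| "mul3 X X = (\<lambda>k. 0)"
| "mul3 Y Y = (\<lambda>k. 0)"

fun form3 :: "k3 \<Rightarrow> k3 \<Rightarrow> 'a::field" where
  "form3 E E = 1/2"
| "form3 X Y = 1"
| "form3 Y X = -1"
| "form3 _ _ = 0"

text \<open>Basis of K10 = F 1 + K3 (x) K3: the identity One and the tensors T a b.\<close>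
datatype b10 = One | T k3 k3

instance b10 :: finite
proof
  have "UNIV = insert One (case_prod T ` UNIV)"
    by (auto intro: b10.exhaust)
  then show "finite (UNIV :: b10 set)" by (metis finite_UNIV finite_imageI finite_insert)
qed

fun par10 :: "b10 \<Rightarrow> bool" where
  "par10 One = False"
| "par10 (T a b) = (par3 a \<noteq> par3 b)"

definition unit10 :: "b10 \<Rightarrow> b10 \<Rightarrow> 'a::field" where
  "unit10 i = (\<lambda>k. if k = i then 1 else 0)"

text \<open>Product of basis vectors of K10:
  (a(x)b)(c(x)d) = (-1)^(|b||c|) (ac (x) bd - 3/4 (a|c)(b|d) 1).\<close>
fun mul10b :: "b10 \<Rightarrow> b10 \<Rightarrow> b10 \<Rightarrow> 'a::field" where
  "mul10b One j = unit10 j"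
| "mul10b (T a b) One = unit10 (T a b)"
| "mul10b (T a b) (T c d) =
     (\<lambda>k. (if par3 b \<and> par3 c then -1 else 1) *
        (case k of One \<Rightarrow> - (3/4) * form3 a c * form3 b d
                 | T p q \<Rightarrow> mul3 a c p * mul3 b d q))"

type_synonym 'a k10 = "b10 \<Rightarrow> 'a"

definition vzero :: "'a::field k10" where "vzero = (\<lambda>i. 0)"
definition vadd :: "'a::field k10 \<Rightarrow> 'a k10 \<Rightarrow> 'a k10" where
  "vadd u v = (\<lambda>i. u i + v i)"
definition smul :: "'a::field \<Rightarrow> 'a k10 \<Rightarrow> 'a k10" where
  "smul c u = (\<lambda>i. c * u i)"

definition mult10 :: "'a::field k10 \<Rightarrow> 'a k10 \<Rightarrow> 'a k10" where
  "mult10 u v = (\<lambda>k. \<Sum>i\<in>UNIV. \<Sum>j\<in>UNIV. u i * v j * mul10b i j k)"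

definition is_even :: "'a::field k10 \<Rightarrow> bool" where
  "is_even u \<longleftrightarrow> (\<forall>i. par10 i \<longrightarrow> u i = 0)"
definition is_odd :: "'a::field k10 \<Rightarrow> bool" where
  "is_odd u \<longleftrightarrow> (\<forall>i. \<not> par10 i \<longrightarrow> u i = 0)"
definition even_part :: "'a::field k10 \<Rightarrow> 'a k10" where
  "even_part u = (\<lambda>i. if par10 i then 0 else u i)"

text \<open>Graded subalgebra: subspace closed under product and under taking the even
  (hence also the odd) homogeneous component.\<close>
definition subalg :: "'a::field k10 set \<Rightarrow> bool" where
  "subalg S \<longleftrightarrow> vzero \<in> S \<and> (\<forall>u\<in>S. \<forall>v\<in>S. vadd u v \<in> S) \<and>
     (\<forall>c. \<forall>u\<in>S. smul c u \<in> S) \<and> (\<forall>u\<in>S. \<forall>v\<in>S. mult10 u v \<in> S) \<and>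
     (\<forall>u\<in>S. even_part u \<in> S)"

definition maximal_subalg :: "'a::field k10 set \<Rightarrow> bool" where
  "maximal_subalg S \<longleftrightarrow> subalg S \<and> S \<noteq> UNIV \<and>
     (\<forall>S'. subalg S' \<and> S \<subseteq> S' \<and> S' \<noteq> UNIV \<longrightarrow> S' = S)"

definition aut10 :: "('a::field k10 \<Rightarrow> 'a k10) \<Rightarrow> bool" where
  "aut10 f \<longleftrightarrow> bij f \<and> (\<forall>u v. f (vadd u v) = vadd (f u) (f v)) \<and>
     (\<forall>c u. f (smul c u) = smul c (f u)) \<and>
     (\<forall>u v. f (mult10 u v) = mult10 (f u) (f v)) \<and>
     (\<forall>u. is_even u \<longrightarrow> is_even (f u)) \<and> (\<forall>u. is_odd u \<longrightarrow> is_odd (f u))"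

definition phi10 :: "'a::field k10 \<Rightarrow> 'a k10" where
  "phi10 u = (\<lambda>k. case k of One \<Rightarrow> u One
     | T c d \<Rightarrow> (if par3 c \<and> par3 d then -1 else 1) * u (T d c))"

definition sub_even :: "'a::field k10 set" where
  "sub_even = {u. is_even u}"
definition sub_phi :: "'a::field k10 set" where
  "sub_phi = {u. phi10 u = u}"
text \<open>F 1 + (M (x) K3), M = Fe + Fx.\<close>
definition sub_M :: "'a::field k10 set" where
  "sub_M = {u. \<forall>c. u (T Y c) = 0}"
text \<open>F 1 + F(e(x)e) + (x (x) K3) + (K3 (x) y).\<close>
definition sub_iv :: "'a::field k10 set" where
  "sub_iv = {u. \<forall>a b. (a, b) \<noteq> (E, E) \<and> a \<noteq> X \<and> b \<noteq> Y \<longrightarrow> u (T a b) = 0}"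

end

theory Submission
  imports Defs
begin

lemma UNIV_k3: "(UNIV::k3 set) = {E,X,Y}" using k3.exhaust by auto
lemma UNIV_b10: "(UNIV::b10 set) = {One, T E E, T E X, T E Y, T X E, T X X, T X Y, T Y E, T Y X, T Y Y}"
  by (auto intro: b10.exhaust k3.exhaust)

definition vec :: "'a::field \<Rightarrow> 'a \<Rightarrow> 'a \<Rightarrow> 'a \<Rightarrow> 'a \<Rightarrow> 'a \<Rightarrow> 'a \<Rightarrow> 'a \<Rightarrow> 'a \<Rightarrow> 'a \<Rightarrow> 'a k10" where
 "vec a0 aEE aEX aEY aXE aXX aXY aYE aYX aYY = (\<lambda>k. case k of One \<Rightarrow> a0 | T a b \<Rightarrow>
   (case a of E \<Rightarrow> (case b of E \<Rightarrow> aEE | X \<Rightarrow> aEX | Y \<Rightarrow> aEY)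
    | X \<Rightarrow> (case b of E \<Rightarrow> aXE | X \<Rightarrow> aXX | Y \<Rightarrow> aXY)
    | Y \<Rightarrow> (case b of E \<Rightarrow> aYE | X \<Rightarrow> aYX | Y \<Rightarrow> aYY)))"

lemma vec_simps[simp]:
  "vec a0 aEE aEX aEY aXE aXX aXY aYE aYX aYY One = a0"
  "vec a0 aEE aEX aEY aXE aXX aXY aYE aYX aYY (T E E) = aEE"
  "vec a0 aEE aEX aEY aXE aXX aXY aYE aYX aYY (T E X) = aEX"
  "vec a0 aEE aEX aEY aXE aXX aXY aYE aYX aYY (T E Y) = aEY"
  "vec a0 aEE aEX aEY aXE aXX aXY aYE aYX aYY (T X E) = aXE"
  "vec a0 aEE aEX aEY aXE aXX aXY aYE aYX aYY (T X X) = aXX"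
  "vec a0 aEE aEX aEY aXE aXX aXY aYE aYX aYY (T X Y) = aXY"
  "vec a0 aEE aEX aEY aXE aXX aXY aYE aYX aYY (T Y E) = aYE"
  "vec a0 aEE aEX aEY aXE aXX aXY aYE aYX aYY (T Y X) = aYX"
  "vec a0 aEE aEX aEY aXE aXX aXY aYE aYX aYY (T Y Y) = aYY"
  by (simp_all add: vec_def)

lemma vec_eta: "(u::'a::field k10) = vec (u One) (u (T E E)) (u (T E X)) (u (T E Y)) (u (T X E)) (u (T X X)) (u (T X Y)) (u (T Y E)) (u (T Y X)) (u (T Y Y))"
  apply (rule ext) subgoal for k by (cases k) (auto simp: vec_def split: k3.split)
  done

lemma vec_eq_iff: "(vec a0 aEE aEX aEY aXE aXX aXY aYE aYX aYY = vec b0 bEE bEX bEY bXE bXX bXY bYE bYX bYY) \<longleftrightarrow>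
  a0 = b0 \<and> aEE = bEE \<and> aEX = bEX \<and> aEY = bEY \<and> aXE = bXE \<and> aXX = bXX \<and> aXY = bXY \<and> aYE = bYE \<and> aYX = bYX \<and> aYY = bYY"
  by (metis vec_simps)

lemma mult_vec: "mult10 (vec a0 aEE aEX aEY aXE aXX aXY aYE aYX aYY) (vec b0 bEE bEX bEY bXE bXX bXY bYE bYX bYY) = vec (a0*b0 - (3/16)*aEE*bEE - (3/8)*aEX*bEY + (3/8)*aEY*bEX - (3/8)*aXE*bYE + (3/4)*aXX*bYY - (3/4)*aXY*bYX + (3/8)*aYE*bXE - (3/4)*aYX*bXY + (3/4)*aYY*bXX) (a0*bEE + aEE*b0 + aEE*bEE + aEX*bEY - aEY*bEX + aXE*bYE - aXX*bYY + aXY*bYX - aYE*bXE + aYX*bXY - aYY*bXX) (a0*bEX + (1/2)*aEE*bEX + aEX*b0 + (1/2)*aEX*bEE + (1/2)*aXE*bYX - (1/2)*aXX*bYE - (1/2)*aYE*bXX + (1/2)*aYX*bXE) (a0*bEY + (1/2)*aEE*bEY + aEY*b0 + (1/2)*aEY*bEE + (1/2)*aXE*bYY - (1/2)*aXY*bYE - (1/2)*aYE*bXY + (1/2)*aYY*bXE) (a0*bXE + (1/2)*aEE*bXE - (1/2)*aEX*bXY + (1/2)*aEY*bXX + aXE*b0 + (1/2)*aXE*bEE + (1/2)*aXX*bEY - (1/2)*aXY*bEX) (a0*bXX + (1/4)*aEE*bXX - (1/4)*aEX*bXE + (1/4)*aXE*bEX + aXX*b0 + (1/4)*aXX*bEE)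 (a0*bXY + (1/4)*aEE*bXY - (1/4)*aEY*bXE + (1/4)*aXE*bEY + aXY*b0 + (1/4)*aXY*bEE) (a0*bYE + (1/2)*aEE*bYE - (1/2)*aEX*bYY + (1/2)*aEY*bYX + aYE*b0 + (1/2)*aYE*bEE + (1/2)*aYX*bEY - (1/2)*aYY*bEX) (a0*bYX + (1/4)*aEE*bYX - (1/4)*aEX*bYE + (1/4)*aYE*bEX + aYX*b0 + (1/4)*aYX*bEE) (a0*bYY + (1/4)*aEE*bYY - (1/4)*aEY*bYE + (1/4)*aYE*bEY + aYY*b0 + (1/4)*aYY*bEE)"
  apply (rule ext) subgoal for k
  apply (cases k)
   apply (simp add: mult10_def UNIV_b10 unit10_def unit3_def vec_def algebra_simps)
  subgoal for a b by (cases a; cases b) (simp_all add: mult10_def UNIV_b10 unit10_def unit3_def vec_def algebra_simps)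
  done
  done

definition multf :: "'a::field \<Rightarrow> 'a \<Rightarrow> 'a \<Rightarrow> 'a \<Rightarrow> 'a \<Rightarrow> 'a k10 \<Rightarrow> 'a k10 \<Rightarrow> 'a k10" where
 "multf k2 k4 k38 k34 k316 a b = (case (a One, a (T E E), a (T E X), a (T E Y), a (T X E), a (T X X), a (T X Y), a (T Y E), a (T Y X), a (T Y Y)) of (a0,aEE,aEX,aEY,aXE,aXX,aXY,aYE,aYX,aYY) \<Rightarrow> case (b One, b (T E E), b (T E X), b (T E Y), b (T X E), b (T X X), b (T X Y), b (T Y E), b (T Y X), b (T Y Y)) of (b0,bEE,bEX,bEY,bXE,bXX,bXY,bYE,bYX,bYY) \<Rightarrow> vec (a0*b0 - k316*aEE*bEE - k38*aEX*bEY + k38*aEY*bEX - k38*aXE*bYE + k34*aXX*bYY - k34*aXY*bYX + k38*aYE*bXE - k34*aYX*bXY + k34*aYY*bXX) (a0*bEE + aEE*b0 + aEE*bEE + aEX*bEY - aEY*bEX + aXE*bYE - aXX*bYY + aXY*bYX - aYE*bXE + aYX*bXY - aYY*bXX) (a0*bEX + k2*aEE*bEX + aEX*b0 + k2*aEX*bEE + k2*aXE*bYX - k2*aXX*bYE - k2*aYE*bXX + k2*aYX*bXE) (a0*bEY + k2*aEE*bEY + aEY*b0 + k2*aEY*bEE + k2*aXE*bYY - k2*aXY*bYE - k2*aYE*bXY + k2*aYY*bXE) (a0*bXE + k2*aEE*bXE - k2*aEX*bXY + k2*aEY*bXX + aXE*b0 + k2*aXE*bEE + k2*aXX*bEY -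 k2*aXY*bEX) (a0*bXX + k4*aEE*bXX - k4*aEX*bXE + k4*aXE*bEX + aXX*b0 + k4*aXX*bEE) (a0*bXY + k4*aEE*bXY - k4*aEY*bXE + k4*aXE*bEY + aXY*b0 + k4*aXY*bEE) (a0*bYE + k2*aEE*bYE - k2*aEX*bYY + k2*aEY*bYX + aYE*b0 + k2*aYE*bEE + k2*aYX*bEY - k2*aYY*bEX) (a0*bYX + k4*aEE*bYX - k4*aEX*bYE + k4*aYE*bEX + aYX*b0 + k4*aYX*bEE) (a0*bYY + k4*aEE*bYY - k4*aEY*bYE + k4*aYE*bEY + aYY*b0 + k4*aYY*bEE))"

lemma mult10_multf: "mult10 u v = multf (1/2) (1/4) (3/8) (3/4) (3/16) u v"
  apply (rule ssubst[OF vec_eta[of u]])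
  apply (rule ssubst[OF vec_eta[of v]])
  by (simp only: mult_vec multf_def vec_simps prod.case)

definition ov :: "'a::field \<Rightarrow> 'a \<Rightarrow> 'a \<Rightarrow> 'a \<Rightarrow> 'a k10" where
  "ov p1 p2 q1 q2 = vec 0 0 q1 q2 p1 0 0 p2 0 0"
definition evv :: "'a::field \<Rightarrow> 'a \<Rightarrow> 'a \<Rightarrow> 'a \<Rightarrow> 'a \<Rightarrow> 'a \<Rightarrow> 'a k10" where
  "evv a e t11 t12 t21 t22 = vec a e 0 0 0 t11 t12 0 t21 t22"

lemma vadd_vec: "vadd (vec a0 aEE aEX aEY aXE aXX aXY aYE aYX aYY) (vec b0 bEE bEX bEY bXE bXX bXY bYE bYX bYY)
  = vec (a0+b0) (aEE+bEE) (aEX+bEX) (aEY+bEY) (aXE+bXE) (aXX+bXX) (aXY+bXY) (aYE+bYE) (aYX+bYX) (aYY+bYY)"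
  unfolding vadd_def by (rule ext) (simp add: vec_def split: b10.split k3.split)

lemma smul_vec: "smul c (vec a0 aEE aEX aEY aXE aXX aXY aYE aYX aYY)
  = vec (c*a0) (c*aEE) (c*aEX) (c*aEY) (c*aXE) (c*aXX) (c*aXY) (c*aYE) (c*aYX) (c*aYY)"
  unfolding smul_def by (rule ext) (simp add: vec_def split: b10.split k3.split)

lemma vzero_vec: "vzero = vec 0 0 0 0 0 0 0 0 0 0"
  unfolding vzero_def by (rule ext) (simp add: vec_def split: b10.split k3.split)

lemma even_part_vec: "even_part (vec a0 aEE aEX aEY aXE aXX aXY aYE aYX aYY) = vec a0 aEE 0 0 0 aXX aXY 0 aYX aYY"
  unfolding even_part_def by (rule ext) (simp add: vec_def split: b10.split k3.split)

lemma is_even_iff: "is_even u \<longleftrightarrow> u (T E X) = 0 \<and> u (T E Y) = 0 \<and> u (T X E) = 0 \<and> u (T Y E) = 0"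
  unfolding is_even_def
  apply (rule iffI)
   apply simp
  apply clarify
  subgoal for i by (cases i) (auto split: k3.splits elim: par3.elims)
  done

lemma is_odd_iff: "is_odd u \<longleftrightarrow> u One = 0 \<and> u (T E E) = 0 \<and> u (T X X) = 0 \<and> u (T X Y) = 0 \<and> u (T Y X) = 0 \<and> u (T Y Y) = 0"
  unfolding is_odd_def
  apply (rule iffI)
   apply simp
  apply clarify
  subgoal for i by (cases i) (auto split: k3.splits elim: par3.elims)
  done

lemma ov_simps[simp]:
  "ov p1 p2 q1 q2 One = 0" "ov p1 p2 q1 q2 (T E E) = 0" "ov p1 p2 q1 q2 (T E X) = q1" "ov p1 p2 q1 q2 (T E Y) = q2"
  "ov p1 p2 q1 q2 (T X E) = p1" "ov p1 p2 q1 q2 (T X X) = 0" "ov p1 p2 q1 q2 (T X Y) = 0" "ov p1 p2 q1 q2 (T Y E) = p2"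
  "ov p1 p2 q1 q2 (T Y X) = 0" "ov p1 p2 q1 q2 (T Y Y) = 0"
  by (simp_all add: ov_def)

lemma evv_simps[simp]:
  "evv a e t11 t12 t21 t22 One = a" "evv a e t11 t12 t21 t22 (T E E) = e" "evv a e t11 t12 t21 t22 (T E X) = 0"
  "evv a e t11 t12 t21 t22 (T E Y) = 0" "evv a e t11 t12 t21 t22 (T X E) = 0" "evv a e t11 t12 t21 t22 (T X X) = t11"
  "evv a e t11 t12 t21 t22 (T X Y) = t12" "evv a e t11 t12 t21 t22 (T Y E) = 0" "evv a e t11 t12 t21 t22 (T Y X) = t21"
  "evv a e t11 t12 t21 t22 (T Y Y) = t22"
  by (simp_all add: evv_def)

lemma ov_eq_iff: "ov p1 p2 q1 q2 = ov r1 r2 s1 s2 \<longleftrightarrow> p1 = r1 \<and> p2 = r2 \<and> q1 = s1 \<and> q2 = s2"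
  by (auto simp add: ov_def vec_eq_iff)
lemma evv_eq_iff: "evv a e t11 t12 t21 t22 = evv b f s11 s12 s21 s22 \<longleftrightarrow> a = b \<and> e = f \<and> t11 = s11 \<and> t12 = s12 \<and> t21 = s21 \<and> t22 = s22"
  by (auto simp add: evv_def vec_eq_iff)

lemma multf_ov_ov: "multf k2 k4 k38 k34 k316 (ov p1 p2 q1 q2) (ov r1 r2 s1 s2) =
  evv (- k38*(q1*s2 - q2*s1 + p1*r2 - p2*r1)) (q1*s2 - q2*s1 + p1*r2 - p2*r1)
      (k4*(p1*s1 - q1*r1)) (k4*(p1*s2 - q2*r1)) (k4*(p2*s1 - q1*r2)) (k4*(p2*s2 - q2*r2))"
  unfolding ov_def evv_def multf_def vec_eq_iff vec_simps prod.case by (intro conjI; algebra)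
lemma multf_evv_evv: "multf k2 k4 k38 k34 k316 (evv a e t11 t12 t21 t22) (evv b f s11 s12 s21 s22) =
  evv (a*b - k316*e*f + k34*(t11*s22 - t12*s21 - t21*s12 + t22*s11)) (a*f + e*b + e*f - (t11*s22 - t12*s21 - t21*s12 + t22*s11))
   (a*s11 + k4*e*s11 + t11*b + k4*t11*f) (a*s12 + k4*e*s12 + t12*b + k4*t12*f)
   (a*s21 + k4*e*s21 + t21*b + k4*t21*f) (a*s22 + k4*e*s22 + t22*b + k4*t22*f)"
  unfolding ov_def evv_def multf_def vec_eq_iff vec_simps prod.case by (intro conjI; algebra)
lemma multf_evv_ov: "multf k2 k4 k38 k34 k316 (evv a e t11 t12 t21 t22) (ov p1 p2 q1 q2) =
  ov ((a + k2*e)*p1 + k2*(t11*q2 - t12*q1)) ((a + k2*e)*p2 + k2*(t21*q2 - t22*q1))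
     ((a + k2*e)*q1 + k2*(t21*p1 - t11*p2)) ((a + k2*e)*q2 + k2*(t22*p1 - t12*p2))"
  unfolding ov_def evv_def multf_def vec_eq_iff vec_simps prod.case by (intro conjI; algebra)
lemma multf_ov_evv: "multf k2 k4 k38 k34 k316 (ov p1 p2 q1 q2) (evv a e t11 t12 t21 t22) =
  ov ((a + k2*e)*p1 + k2*(t11*q2 - t12*q1)) ((a + k2*e)*p2 + k2*(t21*q2 - t22*q1))
     ((a + k2*e)*q1 + k2*(t21*p1 - t11*p2)) ((a + k2*e)*q2 + k2*(t22*p1 - t12*p2))"
  unfolding ov_def evv_def multf_def vec_eq_iff vec_simps prod.case by (intro conjI; algebra)

lemmas mult_ov_ov = multf_ov_ov[of "1/2" "1/4" "3/8" "3/4" "3/16", folded mult10_multf]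
lemmas mult_evv_evv = multf_evv_evv[of "1/2" "1/4" "3/8" "3/4" "3/16", folded mult10_multf]
lemmas mult_evv_ov = multf_evv_ov[of "1/2" "1/4" "3/8" "3/4" "3/16", folded mult10_multf]
lemmas mult_ov_evv = multf_ov_evv[of "1/2" "1/4" "3/8" "3/4" "3/16", folded mult10_multf]

lemma vadd_ov: "vadd (ov p1 p2 q1 q2) (ov r1 r2 s1 s2) = ov (p1+r1) (p2+r2) (q1+s1) (q2+s2)"
  by (simp add: ov_def vadd_vec)
lemma smul_ov: "smul c (ov p1 p2 q1 q2) = ov (c*p1) (c*p2) (c*q1) (c*q2)"
  by (simp add: ov_def smul_vec)
lemma vadd_evv: "vadd (evv a e t11 t12 t21 t22) (evv b f s11 s12 s21 s22) = evv (a+b) (e+f) (t11+s11) (t12+s12) (t21+s21) (t22+s22)"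
  by (simp add: evv_def vadd_vec)
lemma smul_evv: "smul c (evv a e t11 t12 t21 t22) = evv (c*a) (c*e) (c*t11) (c*t12) (c*t21) (c*t22)"
  by (simp add: evv_def smul_vec)

lemma vec_split: "vec a0 aEE aEX aEY aXE aXX aXY aYE aYX aYY = vadd (evv a0 aEE aXX aXY aYX aYY) (ov aXE aYE aEX aEY)"
  by (simp add: ov_def evv_def vadd_vec)

lemma sa_add: "subalg S \<Longrightarrow> u \<in> S \<Longrightarrow> v \<in> S \<Longrightarrow> vadd u v \<in> S" by (simp add: subalg_def)
lemma sa_smul: "subalg S \<Longrightarrow> u \<in> S \<Longrightarrow> smul c u \<in> S" by (simp add: subalg_def)
lemma sa_mul: "subalg S \<Longrightarrow> u \<in> S \<Longrightarrow> v \<in> S \<Longrightarrow> mult10 u v \<in> S" by (simp add: subalg_def)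
lemma sa_ep: "subalg S \<Longrightarrow> u \<in> S \<Longrightarrow> even_part u \<in> S" by (simp add: subalg_def)
lemma sa_zero: "subalg S \<Longrightarrow> vzero \<in> S" by (simp add: subalg_def)

lemma sa_evp: assumes "subalg S" "u \<in> S"
  shows "evv (u One) (u (T E E)) (u (T X X)) (u (T X Y)) (u (T Y X)) (u (T Y Y)) \<in> S"
proof -
  have "even_part u \<in> S" using assms sa_ep by blast
  moreover have "even_part u = evv (u One) (u (T E E)) (u (T X X)) (u (T X Y)) (u (T Y X)) (u (T Y Y))"
    by (subst vec_eta[of u]) (simp add: even_part_vec evv_def)
  ultimately show ?thesis by simp
qed

lemma sa_odp: assumes "subalg S" "u \<in> S"
  shows "ov (u (T X E)) (u (T Y E)) (u (T E X)) (u (T E Y)) \<in> S"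
proof -
  have "even_part u \<in> S" using assms sa_ep by blast
  hence "vadd u (smul (-1) (even_part u)) \<in> S" using assms sa_add sa_smul by blast
  moreover have "vadd u (smul (-1) (even_part u)) = ov (u (T X E)) (u (T Y E)) (u (T E X)) (u (T E Y))"
    by (subst (1 2) vec_eta[of u]) (simp add: even_part_vec ov_def vadd_vec smul_vec)
  ultimately show ?thesis by simp
qed

lemma sa_ov_lin: "subalg S \<Longrightarrow> ov p1 p2 q1 q2 \<in> S \<Longrightarrow> ov r1 r2 s1 s2 \<in> S \<Longrightarrow>
   ov (a*p1 + b*r1) (a*p2 + b*r2) (a*q1 + b*s1) (a*q2 + b*s2) \<in> S"
  using sa_add[of S "smul a (ov p1 p2 q1 q2)" "smul b (ov r1 r2 s1 s2)"] sa_smul[of S "ov p1 p2 q1 q2" a] sa_smul[of S "ov r1 r2 s1 s2" b]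
  by (simp add: smul_ov vadd_ov)

lemma sa_ov_sc: "subalg S \<Longrightarrow> ov p1 p2 q1 q2 \<in> S \<Longrightarrow> ov (a*p1) (a*p2) (a*q1) (a*q2) \<in> S"
  using sa_smul[of S "ov p1 p2 q1 q2" a] by (simp add: smul_ov)

lemma sa_evv_lin: "subalg S \<Longrightarrow> evv a e t11 t12 t21 t22 \<in> S \<Longrightarrow> evv b f s11 s12 s21 s22 \<in> S \<Longrightarrow>
   evv (c*a + d*b) (c*e + d*f) (c*t11 + d*s11) (c*t12 + d*s12) (c*t21 + d*s21) (c*t22 + d*s22) \<in> S"
  using sa_add[of S "smul c (evv a e t11 t12 t21 t22)" "smul d (evv b f s11 s12 s21 s22)"] sa_smul[of S "evv a e t11 t12 t21 t22" c] sa_smul[of S "evv b f s11 s12 s21 s22" d]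
  by (simp add: smul_evv vadd_evv)

lemma sa_evv_sc: "subalg S \<Longrightarrow> evv a e t11 t12 t21 t22 \<in> S \<Longrightarrow> evv (c*a) (c*e) (c*t11) (c*t12) (c*t21) (c*t22) \<in> S"
  using sa_smul[of S "evv a e t11 t12 t21 t22" c] by (simp add: smul_evv)

lemma sa_univ:
  assumes S: "subalg S"
    and "evv 1 0 0 0 0 0 \<in> S" "evv 0 1 0 0 0 0 \<in> S" "evv 0 0 1 0 0 0 \<in> S" "evv 0 0 0 1 0 0 \<in> S"
        "evv 0 0 0 0 1 0 \<in> S" "evv 0 0 0 0 0 1 \<in> S"
        "ov 1 0 0 0 \<in> S" "ov 0 1 0 0 \<in> S" "ov 0 0 1 0 \<in> S" "ov 0 0 0 1 \<in> S"
  shows "S = UNIV"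
proof -
  have ev: "evv a e t11 t12 t21 t22 \<in> S" for a e t11 t12 t21 t22
  proof -
    have 1: "evv a e 0 0 0 0 \<in> S" using sa_evv_lin[OF S assms(2) assms(3), of a e] by simp
    have 2: "evv 0 0 t11 t12 0 0 \<in> S" using sa_evv_lin[OF S assms(4) assms(5), of t11 t12] by simp
    have 3: "evv 0 0 0 0 t21 t22 \<in> S" using sa_evv_lin[OF S assms(6) assms(7), of t21 t22] by simp
    have 4: "evv a e t11 t12 0 0 \<in> S" using sa_evv_lin[OF S 1 2, of 1 1] by simp
    show ?thesis using sa_evv_lin[OF S 4 3, of 1 1] by simp
  qed
  have od: "ov p1 p2 q1 q2 \<in> S" for p1 p2 q1 q2
  proof -
    have 1: "ov p1 p2 0 0 \<in> S" using sa_ov_lin[OF S assms(8) assms(9), of p1 p2] by simp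
    have 2: "ov 0 0 q1 q2 \<in> S" using sa_ov_lin[OF S assms(10) assms(11), of q1 q2] by simp
    show ?thesis using sa_ov_lin[OF S 1 2, of 1 1] by simp
  qed
  show ?thesis
  proof (rule set_eqI, rule iffI)
    fix u :: "'a k10" show "u \<in> S"
      using sa_add[OF S ev od] vec_split vec_eta by metis
  qed simp
qed
lemma ov_memI: "ov p1 p2 q1 q2 \<in> S \<Longrightarrow> p1 = p1' \<Longrightarrow> p2 = p2' \<Longrightarrow> q1 = q1' \<Longrightarrow> q2 = q2' \<Longrightarrow> ov p1' p2' q1' q2' \<in> S"
  by simp
lemma evv_memI: "evv a e t11 t12 t21 t22 \<in> S \<Longrightarrow> a = a' \<Longrightarrow> e = e' \<Longrightarrow> t11 = t11' \<Longrightarrow> t12 = t12' \<Longrightarrow> t21 = t21' \<Longrightarrow> t22 = t22'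
   \<Longrightarrow> evv a' e' t11' t12' t21' t22' \<in> S"
  by simp

lemma nz:
  assumes "(2::'a::field) \<noteq> 0"
  shows "(4::'a) \<noteq> 0" "(8::'a) \<noteq> 0" "(16::'a) \<noteq> 0" "(64::'a) \<noteq> 0"
proof -
  have a: "(4::'a) = 2*2" "(8::'a) = 2*4" "(16::'a) = 2*8" "(64::'a) = 4*16" by simp_all
  show "(4::'a) \<noteq> 0" using assms by (simp only: a(1) mult_eq_0_iff) simp
  then show "(8::'a) \<noteq> 0" using assms by (simp only: a(2) mult_eq_0_iff) simp
  then show "(16::'a) \<noteq> 0" using assms by (simp only: a(3) mult_eq_0_iff) simp
  then show "(64::'a) \<noteq> 0" using \<open>(4::'a) \<noteq> 0\<close> by (simp only: a(4) mult_eq_0_iff) simp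
qed

lemma nzb:
  assumes "(2::'a::field) \<noteq> 0" and "(numeral n :: 'a) \<noteq> 0"
  shows "(numeral (num.Bit0 n) :: 'a) \<noteq> 0"
proof -
  have "(numeral (num.Bit0 n) :: 'a) = 2 * numeral n"
    by (metis mult_2 numeral_Bit0)
  then show ?thesis using assms by (simp only: mult_eq_0_iff) simp
qed

lemma odd_all:
  fixes S :: "'a::field k10 set"
  assumes S: "subalg S" and two: "(2::'a) \<noteq> 0" and three: "(3::'a) \<noteq> 0"
    and o1: "ov 1 0 0 0 \<in> S" and o2: "ov 0 1 0 0 \<in> S" and o3: "ov 0 0 1 0 \<in> S" and o4: "ov 0 0 0 1 \<in> S"
  shows "S = UNIV"
proof -
  note nz = nz[OF two] nzb[OF two]
  have t11: "evv 0 0 1 0 0 0 \<in> S"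
    using sa_evv_sc[OF S sa_mul[OF S o1 o3, unfolded mult_ov_ov], of 4] nz by simp
  have t12: "evv 0 0 0 1 0 0 \<in> S"
    using sa_evv_sc[OF S sa_mul[OF S o1 o4, unfolded mult_ov_ov], of 4] nz by simp
  have t21: "evv 0 0 0 0 1 0 \<in> S"
    using sa_evv_sc[OF S sa_mul[OF S o2 o3, unfolded mult_ov_ov], of 4] nz by simp
  have t22: "evv 0 0 0 0 0 1 \<in> S"
    using sa_evv_sc[OF S sa_mul[OF S o2 o4, unfolded mult_ov_ov], of 4] nz by simp
  have c: "evv (-(3/8)) 1 0 0 0 0 \<in> S"
    using sa_mul[OF S o1 o2, unfolded mult_ov_ov] by simp
  have cc: "evv (-(3/64)) (1/4) 0 0 0 0 \<in> S"
    apply (rule evv_memI[OF sa_mul[OF S c c, unfolded mult_evv_evv]])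
    using nz by (simp_all add: field_simps)
  have one: "evv 1 0 0 0 0 0 \<in> S"
    apply (rule evv_memI[OF sa_evv_lin[OF S cc c, of "64/3" "-16/3"]])
    using nz three by (simp_all add: field_simps)
  have ee: "evv 0 1 0 0 0 0 \<in> S"
    apply (rule evv_memI[OF sa_evv_lin[OF S c one, of 1 "3/8"]])
    using nz three by (simp_all add: field_simps)
  show ?thesis by (rule sa_univ[OF S one ee t11 t12 t21 t22 o1 o2 o3 o4])
qed

lemma aut_vzero: assumes "aut10 f" shows "f vzero = vzero"
proof -
  have "f (vadd vzero vzero) = vadd (f vzero) (f vzero)" using assms by (simp add: aut10_def)
  moreover have "vadd vzero vzero = (vzero::'a k10)" by (simp add: vadd_def vzero_def)
  ultimately have "f vzero = vadd (f vzero) (f vzero)" by simp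
  hence "\<And>i. f vzero i = f vzero i + f vzero i" by (metis vadd_def)
  hence "\<And>i. f vzero i = 0" by (metis add_cancel_right_right)
  thus ?thesis by (auto simp: vzero_def)
qed

definition odd_part :: "'a::field k10 \<Rightarrow> 'a k10" where
  "odd_part u = (\<lambda>i. if par10 i then u i else 0)"

lemma decomp: "u = vadd (even_part u) (odd_part u)"
  by (auto simp: vadd_def even_part_def odd_part_def)
lemma even_even_part: "is_even (even_part u)" by (simp add: is_even_def even_part_def)
lemma odd_odd_part: "is_odd (odd_part u)" by (simp add: is_odd_def odd_part_def)
lemma even_part_add: "even_part (vadd u v) = vadd (even_part u) (even_part v)"
  by (auto simp: vadd_def even_part_def)
lemma even_part_even: "is_even u \<Longrightarrow> even_part u = u"
  by (auto simp: is_even_def even_part_def)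
lemma even_part_odd: "is_odd u \<Longrightarrow> even_part u = vzero"
  by (auto simp: is_odd_def even_part_def vzero_def)
lemma vadd_vzero: "vadd u vzero = u" by (simp add: vadd_def vzero_def)

lemma aut_even_part: assumes "aut10 f" shows "f (even_part u) = even_part (f u)"
proof -
  have "f u = vadd (f (even_part u)) (f (odd_part u))"
    using assms decomp[of u] by (metis aut10_def)
  hence "even_part (f u) = vadd (even_part (f (even_part u))) (even_part (f (odd_part u)))"
    by (simp add: even_part_add)
  also have "\<dots> = vadd (f (even_part u)) vzero"
    using assms even_even_part[of u] odd_odd_part[of u]
    by (simp add: aut10_def even_part_even even_part_odd)
  finally show ?thesis by (simp add: vadd_vzero)
qed

lemma aut_subalg: assumes f: "aut10 f" and S: "subalg S" shows "subalg (f ` S)"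
  unfolding subalg_def
proof (intro conjI ballI allI)
  show "vzero \<in> f ` S" using aut_vzero[OF f] S by (metis image_eqI subalg_def)
next
  fix u v assume "u \<in> f ` S" "v \<in> f ` S"
  then obtain a b where a: "a \<in> S" "u = f a" and b: "b \<in> S" "v = f b" by blast
  show "vadd u v \<in> f ` S" using a b f S by (metis aut10_def image_eqI sa_add)
  show "mult10 u v \<in> f ` S" using a b f S by (metis aut10_def image_eqI sa_mul)
next
  fix c u assume "u \<in> f ` S"
  then obtain a where a: "a \<in> S" "u = f a" by blast
  show "smul c u \<in> f ` S" using a f S by (metis aut10_def image_eqI sa_smul)
next
  fix u assume "u \<in> f ` S"
  then obtain a where a: "a \<in> S" "u = f a" by blast
  show "even_part u \<in> f ` S" using a f S aut_even_part[OF f, of a] by (metis image_eqI sa_ep)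
qed

lemma aut_univ: assumes "aut10 f" shows "f ` S = UNIV \<longleftrightarrow> S = UNIV"
proof -
  have b: "bij f" using assms by (simp add: aut10_def)
  show ?thesis
  proof
    assume h: "f ` S = UNIV"
    show "S = UNIV"
    proof (rule set_eqI, rule iffI)
      fix u show "u \<in> S"
      proof -
        have "f u \<in> f ` S" using h by simp
        thus ?thesis using bij_is_inj[OF b] by (simp add: inj_image_mem_iff)
      qed
    qed simp
  next
    assume "S = UNIV" thus "f ` S = UNIV" using b bij_is_surj by auto
  qed
qed

lemma aut_inv: assumes f: "aut10 f" shows "aut10 (inv f)"
proof -
  have b: "bij f" using f by (simp add: aut10_def)
  have fi: "f (inv f u) = u" for u using b by (simp add: bij_is_surj surj_f_inv_f)
  have inj: "f a = f b \<Longrightarrow> a = b" for a b using b by (simp add: bij_is_inj inj_eq)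
  have add: "inv f (vadd u v) = vadd (inv f u) (inv f v)" for u v
    by (rule inj) (metis f aut10_def fi)
  have sm: "inv f (smul c u) = smul c (inv f u)" for c u
    by (rule inj) (metis f aut10_def fi)
  have mu: "inv f (mult10 u v) = mult10 (inv f u) (inv f v)" for u v
    by (rule inj) (metis f aut10_def fi)
  have ev: "is_even (inv f u)" if "is_even u" for u
  proof -
    let ?w = "inv f u"
    have u: "u = vadd (f (even_part ?w)) (f (odd_part ?w))"
      using decomp[of ?w] f fi by (metis aut10_def)
    have e1: "is_even (f (even_part ?w))" using f even_even_part by (metis aut10_def)
    have o1: "is_odd (f (odd_part ?w))" using f odd_odd_part by (metis aut10_def)
    have "f (odd_part ?w) = vzero"
    proof (rule ext)
      fix i show "f (odd_part ?w) i = vzero i"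
      proof (cases "par10 i")
        case True
        have "u i = f (even_part ?w) i + f (odd_part ?w) i" using u by (metis vadd_def)
        then show ?thesis using True that e1 by (simp add: is_even_def vzero_def)
      next
        case False then show ?thesis using o1 by (simp add: is_odd_def vzero_def)
      qed
    qed
    hence "odd_part ?w = vzero" using aut_vzero[OF f] inj by metis
    hence "?w = even_part ?w" using decomp[of ?w] by (simp add: vadd_vzero)
    thus ?thesis using even_even_part by metis
  qed
  have od: "is_odd (inv f u)" if "is_odd u" for u
  proof -
    let ?w = "inv f u"
    have u: "u = vadd (f (even_part ?w)) (f (odd_part ?w))"
      using decomp[of ?w] f fi by (metis aut10_def)
    have e1: "is_even (f (even_part ?w))" using f even_even_part by (metis aut10_def)
    have o1: "is_odd (f (odd_part ?w))" using f odd_odd_part by (metis aut10_def)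
    have "f (even_part ?w) = vzero"
    proof (rule ext)
      fix i show "f (even_part ?w) i = vzero i"
      proof (cases "par10 i")
        case False
        have "u i = f (even_part ?w) i + f (odd_part ?w) i" using u by (metis vadd_def)
        then show ?thesis using False that o1 by (simp add: is_odd_def vzero_def)
      next
        case True then show ?thesis using e1 by (simp add: is_even_def vzero_def)
      qed
    qed
    hence "even_part ?w = vzero" using aut_vzero[OF f] inj by metis
    hence "?w = odd_part ?w" using decomp[of ?w] by (simp add: vadd_def vzero_def)
    thus ?thesis using odd_odd_part by metis
  qed
  show ?thesis unfolding aut10_def
    using add sm mu ev od bij_imp_bij_inv[OF b] by blast
qed

lemma aut_comp: assumes "aut10 f" "aut10 g" shows "aut10 (f \<circ> g)"
  using assms unfolding aut10_def by (auto intro: bij_comp)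

lemma aut_id: "aut10 id"
  unfolding aut10_def by simp

lemma aut_maximal: assumes f: "aut10 f" and M: "maximal_subalg S" shows "maximal_subalg (f ` S)"
proof -
  have S: "subalg S" "S \<noteq> UNIV" using M by (auto simp: maximal_subalg_def)
  have g: "aut10 (inv f)" using aut_inv[OF f] .
  have b: "bij f" using f by (simp add: aut10_def)
  have gf: "inv f ` f ` S = S" using b by (simp add: bij_is_inj image_comp)
  have fg: "f ` inv f ` S' = S'" for S' using b
    by (simp add: image_comp bij_is_surj surj_iff comp_def surj_f_inv_f)
  show ?thesis unfolding maximal_subalg_def
  proof (intro conjI allI impI)
    show "subalg (f ` S)" using aut_subalg[OF f S(1)] .
    show "f ` S \<noteq> UNIV" using aut_univ[OF f] S(2) by simp
    fix S' assume h: "subalg S' \<and> f ` S \<subseteq> S' \<and> S' \<noteq> UNIV"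
    have 1: "subalg (inv f ` S')" using aut_subalg[OF g] h by simp
    have 2: "S \<subseteq> inv f ` S'" using h gf by (metis image_mono)
    have 3: "inv f ` S' \<noteq> UNIV" using aut_univ[OF g] h by simp
    have "inv f ` S' = S" using M 1 2 3 by (auto simp: maximal_subalg_def)
    thus "S' = f ` S" using fg by metis
  qed
qed
definition Phi :: "'a::field \<times> 'a \<times> 'a \<times> 'a \<Rightarrow> 'a \<times> 'a \<times> 'a \<times> 'a \<Rightarrow> 'a k10 \<Rightarrow> 'a k10" where
"Phi G H u = (case G of (g11,g12,g21,g22) \<Rightarrow> case H of (h11,h12,h21,h22) \<Rightarrow>
  vec (u One) (u (T E E))
   (h11 * u (T E X) + h12 * u (T E Y)) (h21 * u (T E X) + h22 * u (T E Y))
   (g11 * u (T X E) + g12 * u (T Y E))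
   (g11*u (T X X)*h11 + g11*u (T X Y)*h12 + g12*u (T Y X)*h11 + g12*u (T Y Y)*h12)
   (g11*u (T X X)*h21 + g11*u (T X Y)*h22 + g12*u (T Y X)*h21 + g12*u (T Y Y)*h22)
   (g21 * u (T X E) + g22 * u (T Y E))
   (g21*u (T X X)*h11 + g21*u (T X Y)*h12 + g22*u (T Y X)*h11 + g22*u (T Y Y)*h12)
   (g21*u (T X X)*h21 + g21*u (T X Y)*h22 + g22*u (T Y X)*h21 + g22*u (T Y Y)*h22))"

lemma Phi_multf:
  assumes dg: "g11*g22 - g12*g21 = (1::'a::field)" and dh: "h11*h22 - h12*h21 = 1"
  shows "multf k2 k4 k38 k34 k316 (Phi (g11,g12,g21,g22) (h11,h12,h21,h22) u) (Phi (g11,g12,g21,g22) (h11,h12,h21,h22) v)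
    = Phi (g11,g12,g21,g22) (h11,h12,h21,h22) (multf k2 k4 k38 k34 k316 u v)"
  apply (simp only: Phi_def multf_def prod.case vec_simps vec_eq_iff)
  apply (intro conjI)
  using dg dh by algebra+

lemma Phi_ov: "Phi (g11,g12,g21,g22) (h11,h12,h21,h22) (ov p1 p2 q1 q2) =
   ov (g11*p1+g12*p2) (g21*p1+g22*p2) (h11*q1+h12*q2) (h21*q1+h22*q2)"
  by (simp add: Phi_def ov_def)

lemma Phi_evv: "Phi (g11,g12,g21,g22) (h11,h12,h21,h22) (evv a e t11 t12 t21 t22) =
   evv a e (g11*t11*h11 + g11*t12*h12 + g12*t21*h11 + g12*t22*h12)
   (g11*t11*h21 + g11*t12*h22 + g12*t21*h21 + g12*t22*h22)
   (g21*t11*h11 + g21*t12*h12 + g22*t21*h11 + g22*t22*h12)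
   (g21*t11*h21 + g21*t12*h22 + g22*t21*h21 + g22*t22*h22)"
  by (simp add: Phi_def evv_def)

lemma Phi_inv:
  assumes dg: "g11*g22 - g12*g21 = (1::'a::field)" and dh: "h11*h22 - h12*h21 = 1"
  shows "Phi (g11,g12,g21,g22) (h11,h12,h21,h22) (Phi (g22,-g12,-g21,g11) (h22,-h12,-h21,h11) u) = u"
  apply (rule ssubst[OF vec_eta[of u]])
  apply (simp only: Phi_def prod.case vec_simps vec_eq_iff)
  apply (intro conjI)
  apply (rule refl)+
  using dg dh by algebra+

lemma aut_Phi:
  assumes dg: "g11*g22 - g12*g21 = (1::'a::field)" and dh: "h11*h22 - h12*h21 = 1"
  shows "aut10 (Phi (g11,g12,g21,g22) (h11,h12,h21,h22))"
proof -
  let ?f = "Phi (g11,g12,g21,g22) (h11,h12,h21,h22)"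
  let ?g = "Phi (g22,-g12,-g21,g11) (h22,-h12,-h21,h11)"
  have fg: "?f (?g u) = u" for u by (rule Phi_inv[OF dg dh])
  have gf: "?g (?f u) = u" for u
  proof -
    have d1: "g22*g11 - (-g12)*(-g21) = 1" "h22*h11 - (-h12)*(-h21) = 1" using dg dh by (simp_all add: algebra_simps)
    show ?thesis using Phi_inv[OF d1, of u] by simp
  qed
  have bij: "bij ?f" using fg gf by (metis bijI' )
  have add: "?f (vadd u v) = vadd (?f u) (?f v)" for u v
    apply (rule ssubst[OF vec_eta[of u]], rule ssubst[OF vec_eta[of v]])
    by (simp add: Phi_def vadd_vec vec_eq_iff algebra_simps)
  have sm: "?f (smul c u) = smul c (?f u)" for c u
    apply (rule ssubst[OF vec_eta[of u]])
    by (simp add: Phi_def smul_vec vec_eq_iff algebra_simps)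
  have mu: "?f (mult10 u v) = mult10 (?f u) (?f v)" for u v
    by (simp only: mult10_multf Phi_multf[OF dg dh])
  have ev: "is_even u \<Longrightarrow> is_even (?f u)" for u by (simp add: is_even_iff Phi_def)
  have od: "is_odd u \<Longrightarrow> is_odd (?f u)" for u by (simp add: is_odd_iff Phi_def)
  show ?thesis unfolding aut10_def using bij add sm mu ev od by blast
qed

lemma phi_vec: "phi10 (vec a0 aEE aEX aEY aXE aXX aXY aYE aYX aYY) = vec a0 aEE aXE aYE aEX (-aXX) (-aYX) aEY (-aXY) (-aYY)"
  apply (rule ext) subgoal for k
  apply (cases k)
   apply (simp add: phi10_def)
  subgoal for a b by (cases a; cases b) (simp_all add: phi10_def)
  done done

lemma phi_ov: "phi10 (ov p1 p2 q1 q2) = ov q1 q2 p1 p2"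
  by (simp add: ov_def phi_vec)
lemma phi_evv: "phi10 (evv a e t11 t12 t21 t22) = evv a e (-t11) (-t21) (-t12) (-t22)"
  by (simp add: evv_def phi_vec)

lemma phi_phi: "phi10 (phi10 u) = u"
  apply (rule ssubst[OF vec_eta[of u]])
  by (simp add: phi_vec)

lemma phi_multf: "multf k2 k4 k38 k34 k316 (phi10 u) (phi10 v) = phi10 (multf k2 k4 k38 k34 k316 u v)"
  apply (rule ssubst[OF vec_eta[of u]], rule ssubst[OF vec_eta[of v]])
  apply (simp only: phi_vec multf_def prod.case vec_simps vec_eq_iff)
  apply (intro conjI)
  by algebra+

lemma aut_phi: "aut10 (phi10::'a::field k10 \<Rightarrow> 'a k10)"
proof -
  have bij: "bij (phi10::'a k10 \<Rightarrow> 'a k10)" using phi_phi by (metis bijI')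
  have add: "phi10 (vadd u v) = vadd (phi10 u) (phi10 (v::'a k10))" for u v
    apply (rule ssubst[OF vec_eta[of u]], rule ssubst[OF vec_eta[of v]])
    by (simp add: phi_vec vadd_vec vec_eq_iff)
  have sm: "phi10 (smul c u) = smul c (phi10 (u::'a k10))" for c u
    apply (rule ssubst[OF vec_eta[of u]])
    by (simp add: phi_vec smul_vec vec_eq_iff)
  have mu: "phi10 (mult10 u v) = mult10 (phi10 u) (phi10 (v::'a k10))" for u v
    by (simp only: mult10_multf phi_multf)
  have ev: "is_even u \<Longrightarrow> is_even (phi10 (u::'a k10))" for u by (simp add: is_even_iff phi10_def)
  have od: "is_odd u \<Longrightarrow> is_odd (phi10 (u::'a k10))" for u by (simp add: is_odd_iff phi10_def)
  show ?thesis unfolding aut10_def using bij add sm mu ev od by blast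
qed
lemma lin2:
  fixes a b c d x y :: "'a::field"
  assumes "a*x + b*y = 0" "c*x + d*y = 0" "a*d - b*c \<noteq> 0"
  shows "x = 0 \<and> y = 0"
proof -
  have "(a*d - b*c) * x = d*(a*x + b*y) - b*(c*x + d*y)" by (simp add: algebra_simps)
  hence hx: "(a*d - b*c) * x = 0" using assms by simp
  have "(a*d - b*c) * y = a*(c*x + d*y) - c*(a*x + b*y)" by (simp add: algebra_simps)
  hence hy: "(a*d - b*c) * y = 0" using assms by simp
  show ?thesis using hx hy assms(3) by simp
qed

lemma Dhalf:
  fixes S :: "'a::field k10 set"
  assumes S: "subalg S" and two: "(2::'a) \<noteq> 0"
    and w1: "ov p1 p2 q1 q2 \<in> S" and w2: "ov r1 r2 s1 s2 \<in> S"
    and ne: "p1*r2 - p2*r1 \<noteq> q1*s2 - q2*s1"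
  shows "ov p1 p2 0 0 \<in> S \<and> ov 0 0 q1 q2 \<in> S"
proof -
  note nz = nz[OF two] nzb[OF two]
  define e where "e = p1*r2 - p2*r1"
  define d where "d = q1*s2 - q2*s1"
  have ed: "e - d \<noteq> 0" using ne by (simp add: e_def d_def)
  have m: "ov (e/8*p1) (e/8*p2) (d/8*q1) (d/8*q2) \<in> S"
    apply (rule ov_memI[OF sa_mul[OF S sa_mul[OF S w1 w2] w1, unfolded mult_ov_ov mult_evv_ov]])
    unfolding e_def d_def using nz by (simp_all add: field_simps)
  define k where "k = e - d"
  have k: "k \<noteq> 0" using ed by (simp add: k_def)
  have A0: "ov (k/8*p1) (k/8*p2) 0 0 \<in> S"
    apply (rule ov_memI[OF sa_ov_lin[OF S m w1, of 1 "-(d/8)"]])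
    using nz by (simp_all add: k_def field_simps)
  have A: "ov p1 p2 0 0 \<in> S"
    using sa_ov_sc[OF S A0, of "8/k"] k nz by simp
  have B0: "ov 0 0 (-k/8*q1) (-k/8*q2) \<in> S"
    apply (rule ov_memI[OF sa_ov_lin[OF S m w1, of 1 "-(e/8)"]])
    using nz by (simp_all add: k_def field_simps)
  have B: "ov 0 0 q1 q2 \<in> S"
    using sa_ov_sc[OF S B0, of "-8/k"] k nz by simp
  show ?thesis using A B by simp
qed

lemma Dlem:
  fixes S :: "'a::field k10 set"
  assumes S: "subalg S" and two: "(2::'a) \<noteq> 0"
    and w1: "ov p1 p2 q1 q2 \<in> S" and w2: "ov r1 r2 s1 s2 \<in> S"
    and ne: "p1*r2 - p2*r1 \<noteq> q1*s2 - q2*s1"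
  shows "ov p1 p2 0 0 \<in> S \<and> ov 0 0 q1 q2 \<in> S \<and> ov r1 r2 0 0 \<in> S \<and> ov 0 0 s1 s2 \<in> S"
proof -
  have ne': "r1*p2 - r2*p1 \<noteq> s1*q2 - s2*q1" using ne by (auto simp: algebra_simps)
  show ?thesis using Dhalf[OF S two w1 w2 ne] Dhalf[OF S two w2 w1 ne'] by simp
qed

lemma cramerP:
  fixes S :: "'a::field k10 set"
  assumes S: "subalg S" and a: "ov p1 p2 0 0 \<in> S" and b: "ov r1 r2 0 0 \<in> S" and e: "p1*r2 - p2*r1 \<noteq> 0"
  shows "ov 1 0 0 0 \<in> S \<and> ov 0 1 0 0 \<in> S"
proof -
  define k where "k = p1*r2 - p2*r1"
  have k: "k \<noteq> 0" using e by (simp add: k_def)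
  have A: "ov k 0 0 0 \<in> S"
    apply (rule ov_memI[OF sa_ov_lin[OF S a b, of r2 "-p2"]])
    by (simp_all add: k_def algebra_simps)
  have B: "ov 0 k 0 0 \<in> S"
    apply (rule ov_memI[OF sa_ov_lin[OF S a b, of "-r1" p1]])
    by (simp_all add: k_def algebra_simps)
  show ?thesis using sa_ov_sc[OF S A, of "1/k"] sa_ov_sc[OF S B, of "1/k"] k by simp
qed

lemma cramerQ:
  fixes S :: "'a::field k10 set"
  assumes S: "subalg S" and a: "ov 0 0 p1 p2 \<in> S" and b: "ov 0 0 r1 r2 \<in> S" and e: "p1*r2 - p2*r1 \<noteq> 0"
  shows "ov 0 0 1 0 \<in> S \<and> ov 0 0 0 1 \<in> S"
proof -
  define k where "k = p1*r2 - p2*r1"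
  have k: "k \<noteq> 0" using e by (simp add: k_def)
  have A: "ov 0 0 k 0 \<in> S"
    apply (rule ov_memI[OF sa_ov_lin[OF S a b, of r2 "-p2"]])
    by (simp_all add: k_def algebra_simps)
  have B: "ov 0 0 0 k \<in> S"
    apply (rule ov_memI[OF sa_ov_lin[OF S a b, of "-r1" p1]])
    by (simp_all add: k_def algebra_simps)
  show ?thesis using sa_ov_sc[OF S A, of "1/k"] sa_ov_sc[OF S B, of "1/k"] k by simp
qed

lemma gen_from_evens:
  fixes S :: "'a::field k10 set"
  assumes S: "subalg S" and two: "(2::'a) \<noteq> 0" and three: "(3::'a) \<noteq> 0"
    and t11: "evv 0 0 1 0 0 0 \<in> S" and t12: "evv 0 0 0 1 0 0 \<in> S"
    and t21: "evv 0 0 0 0 1 0 \<in> S" and t22: "evv 0 0 0 0 0 1 \<in> S"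
    and w: "ov p1 p2 q1 q2 \<in> S" and nzw: "p1 \<noteq> 0 \<or> p2 \<noteq> 0 \<or> q1 \<noteq> 0 \<or> q2 \<noteq> 0"
  shows "S = UNIV"
proof -
  note nz = nz[OF two] nzb[OF two]
  have fromx: "S = UNIV" if x: "ov 1 0 0 0 \<in> S"
  proof -
    have a: "ov 0 0 1 0 \<in> S"
      using sa_ov_sc[OF S sa_mul[OF S t21 x, unfolded mult_evv_ov], of 2] two by simp
    have b: "ov 0 0 0 1 \<in> S"
      using sa_ov_sc[OF S sa_mul[OF S t22 x, unfolded mult_evv_ov], of 2] two by simp
    have c: "ov 0 1 0 0 \<in> S"
      using sa_ov_sc[OF S sa_mul[OF S t21 b, unfolded mult_evv_ov], of 2] two by simp
    show ?thesis by (rule odd_all[OF S two three x c a b])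
  qed
  show ?thesis
  proof (cases "p1 = 0 \<and> p2 = 0")
    case True
    then have q: "q1 \<noteq> 0 \<or> q2 \<noteq> 0" using nzw by simp
    have A: "ov (q2/2) 0 0 0 \<in> S"
      using sa_mul[OF S t11 w, unfolded mult_evv_ov] True by simp
    have B: "ov (-q1/2) 0 0 0 \<in> S"
      using sa_mul[OF S t12 w, unfolded mult_evv_ov] True by simp
    show ?thesis
    proof (cases "q2 = 0")
      case False
      show ?thesis apply (rule fromx)
        using sa_ov_sc[OF S A, of "2/q2"] False two by simp
    next
      case True
      then have "q1 \<noteq> 0" using q by simp
      show ?thesis apply (rule fromx)
        using sa_ov_sc[OF S B, of "-2/q1"] \<open>q1 \<noteq> 0\<close> two by simp
    qed
  next
    case False
    show ?thesis
    proof (cases "p2 = 0")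
      case False
      have A: "ov (q2/2) 0 (-p2/2) 0 \<in> S"
        using sa_mul[OF S t11 w, unfolded mult_evv_ov] by simp
      have B: "ov (p2/4) 0 0 0 \<in> S"
        apply (rule ov_memI[OF sa_mul[OF S t12 A, unfolded mult_evv_ov]])
        using nz by (simp_all add: field_simps)
      show ?thesis apply (rule fromx)
        using sa_ov_sc[OF S B, of "4/p2"] False nz by simp
    next
      case True
      then have "p1 \<noteq> 0" using False by simp
      have A: "ov 0 (q2/2) (p1/2) 0 \<in> S"
        using sa_mul[OF S t21 w, unfolded mult_evv_ov] True by simp
      have B: "ov 0 (-p1/4) 0 0 \<in> S"
        apply (rule ov_memI[OF sa_mul[OF S t22 A, unfolded mult_evv_ov]])
        using nz by (simp_all add: field_simps)
      have y: "ov 0 1 0 0 \<in> S"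
        using sa_ov_sc[OF S B, of "-4/p1"] \<open>p1 \<noteq> 0\<close> nz by simp
      have b: "ov 0 0 0 1 \<in> S"
        using sa_ov_sc[OF S sa_mul[OF S t12 y, unfolded mult_evv_ov], of "-2"] two by simp
      have x: "ov 1 0 0 0 \<in> S"
        using sa_ov_sc[OF S sa_mul[OF S t11 b, unfolded mult_evv_ov], of 2] two by simp
      show ?thesis by (rule fromx[OF x])
    qed
  qed
qed
lemmas mult_eta = mult_vec[of "u One" "u (T E E)" "u (T E X)" "u (T E Y)" "u (T X E)" "u (T X X)" "u (T X Y)" "u (T Y E)" "u (T Y X)" "u (T Y Y)"
   "v One" "v (T E E)" "v (T E X)" "v (T E Y)" "v (T X E)" "v (T X X)" "v (T X Y)" "v (T Y E)" "v (T Y X)" "v (T Y Y)",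
   folded vec_eta[of u] vec_eta[of v]] for u v

lemma all_b10: "(\<forall>k. P k) \<longleftrightarrow> P One \<and> (\<forall>a b. P (T a b))" by (metis b10.exhaust)
lemma all_k3: "(\<forall>k. P k) \<longleftrightarrow> P E \<and> P X \<and> P Y" by (metis k3.exhaust)

lemma mem_even: "u \<in> sub_even \<longleftrightarrow> u (T E X) = 0 \<and> u (T E Y) = 0 \<and> u (T X E) = 0 \<and> u (T Y E) = 0"
  by (simp add: sub_even_def is_even_iff)

lemma mem_M: "u \<in> sub_M \<longleftrightarrow> u (T Y E) = 0 \<and> u (T Y X) = 0 \<and> u (T Y Y) = 0"
  unfolding sub_M_def apply auto subgoal for c by (cases c) auto done

lemma mem_iv: "u \<in> sub_iv \<longleftrightarrow> u (T E X) = 0 \<and> u (T Y E) = 0 \<and> u (T Y X) = 0"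
  unfolding sub_iv_def apply (rule iffI) apply simp apply clarify
  subgoal for a b by (cases a; cases b) auto done

lemma mem_phi0: "u \<in> sub_phi \<longleftrightarrow> u (T X E) = u (T E X) \<and> u (T Y E) = u (T E Y) \<and> - u (T X X) = u (T X X)
    \<and> - u (T Y X) = u (T X Y) \<and> - u (T Y Y) = u (T Y Y)"
  unfolding sub_phi_def fun_eq_iff all_b10 all_k3 by (auto simp: phi10_def; metis minus_minus)

lemma neg_self: assumes "(2::'a::field) \<noteq> 0" shows "(- (a::'a) = a) \<longleftrightarrow> a = 0"
proof
  assume "- a = a"
  hence "2 * a = 0" by (metis add_eq_0_iff mult_2)
  thus "a = 0" using assms by simp
qed simp

lemma mem_phi: assumes "(2::'a::field) \<noteq> 0"
  shows "(u::'a k10) \<in> sub_phi \<longleftrightarrow> u (T X E) = u (T E X) \<and> u (T Y E) = u (T E Y) \<and> u (T X X) = 0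
    \<and> u (T X Y) = - u (T Y X) \<and> u (T Y Y) = 0"
  unfolding mem_phi0 neg_self[OF assms] by auto

lemma subalg_even: "subalg (sub_even :: 'a::field k10 set)"
  unfolding subalg_def
proof (intro conjI ballI allI)
  show "vzero \<in> (sub_even :: 'a k10 set)" by (simp add: mem_even vzero_def)
  fix u v :: "'a k10" and c assume u: "u \<in> sub_even" and v: "v \<in> sub_even"
  show "vadd u v \<in> sub_even" using u v by (simp add: mem_even vadd_def)
  show "mult10 u v \<in> sub_even" using u v by (simp add: mem_even mult_eta)
  show "smul c u \<in> sub_even" using u by (simp add: mem_even smul_def)
  show "even_part u \<in> sub_even" using u by (simp add: mem_even even_part_def)
qed

lemma subalg_M: "subalg (sub_M :: 'a::field k10 set)"
  unfolding subalg_def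
proof (intro conjI ballI allI)
  show "vzero \<in> (sub_M :: 'a k10 set)" by (simp add: mem_M vzero_def)
  fix u v :: "'a k10" and c assume u: "u \<in> sub_M" and v: "v \<in> sub_M"
  show "vadd u v \<in> sub_M" using u v by (simp add: mem_M vadd_def)
  show "mult10 u v \<in> sub_M" using u v by (simp add: mem_M mult_eta)
  show "smul c u \<in> sub_M" using u by (simp add: mem_M smul_def)
  show "even_part u \<in> sub_M" using u by (simp add: mem_M even_part_def)
qed

lemma subalg_iv: "subalg (sub_iv :: 'a::field k10 set)"
  unfolding subalg_def
proof (intro conjI ballI allI)
  show "vzero \<in> (sub_iv :: 'a k10 set)" by (simp add: mem_iv vzero_def)
  fix u v :: "'a k10" and c assume u: "u \<in> sub_iv" and v: "v \<in> sub_iv"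
  show "vadd u v \<in> sub_iv" using u v by (simp add: mem_iv vadd_def)
  show "mult10 u v \<in> sub_iv" using u v by (simp add: mem_iv mult_eta)
  show "smul c u \<in> sub_iv" using u by (simp add: mem_iv smul_def)
  show "even_part u \<in> sub_iv" using u by (simp add: mem_iv even_part_def)
qed

lemma subalg_phi: "subalg (sub_phi :: 'a::field k10 set)"
  unfolding subalg_def sub_phi_def
proof (intro conjI ballI allI; simp)
  show "phi10 vzero = (vzero :: 'a k10)" using aut_vzero[OF aut_phi] .
  show "phi10 (vadd u v) = vadd u v" if "phi10 u = u" "phi10 v = v" for u v :: "'a k10"
    using aut_phi that by (metis aut10_def)
  show "phi10 (smul c u) = smul c u" if "phi10 u = u" for c and u :: "'a k10"
    using aut_phi that by (metis aut10_def)
  show "phi10 (mult10 u v) = mult10 u v" if "phi10 u = u" "phi10 v = v" for u v :: "'a k10"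
    using aut_phi that by (metis aut10_def)
  show "phi10 (even_part u) = even_part u" if "phi10 u = u" for u :: "'a k10"
    using aut_even_part[OF aut_phi] that by metis
qed

lemma even_ne: "(sub_even :: 'a::field k10 set) \<noteq> UNIV"
proof - have "ov 1 0 0 0 \<notin> (sub_even :: 'a k10 set)" by (simp add: mem_even) thus ?thesis by auto qed
lemma M_ne: "(sub_M :: 'a::field k10 set) \<noteq> UNIV"
proof - have "ov 0 1 0 0 \<notin> (sub_M :: 'a k10 set)" by (simp add: mem_M) thus ?thesis by auto qed
lemma iv_ne: "(sub_iv :: 'a::field k10 set) \<noteq> UNIV"
proof - have "ov 0 1 0 0 \<notin> (sub_iv :: 'a k10 set)" by (simp add: mem_iv) thus ?thesis by auto qed
lemma phi_ne: "(sub_phi :: 'a::field k10 set) \<noteq> UNIV"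
proof - have "ov 1 0 0 0 \<notin> (sub_phi :: 'a k10 set)" by (simp add: mem_phi0) thus ?thesis by auto qed

lemma maxI:
  assumes "subalg A" "A \<noteq> UNIV"
    and "\<And>S' u. subalg S' \<Longrightarrow> A \<subseteq> S' \<Longrightarrow> u \<in> S' \<Longrightarrow> u \<notin> A \<Longrightarrow> S' = UNIV"
  shows "maximal_subalg A"
  unfolding maximal_subalg_def using assms by blast

lemma max_even:
  assumes two: "(2::'a::field) \<noteq> 0" and three: "(3::'a) \<noteq> 0"
  shows "maximal_subalg (sub_even :: 'a k10 set)"
proof (rule maxI[OF subalg_even even_ne])
  fix S' :: "'a k10 set" and u assume S: "subalg S'" and sub: "sub_even \<subseteq> S'" and u: "u \<in> S'" "u \<notin> sub_even"
  have ev: "evv a e t11 t12 t21 t22 \<in> S'" for a e t11 t12 t21 t22 using sub by (auto simp: mem_even)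
  show "S' = UNIV"
    by (rule gen_from_evens[OF S two three ev ev ev ev sa_odp[OF S u(1)]]) (use u(2) in \<open>auto simp: mem_even\<close>)
qed

lemma max_M:
  assumes two: "(2::'a::field) \<noteq> 0" and three: "(3::'a) \<noteq> 0"
  shows "maximal_subalg (sub_M :: 'a k10 set)"
proof (rule maxI[OF subalg_M M_ne])
  fix S' :: "'a k10 set" and u assume S: "subalg S'" and sub: "sub_M \<subseteq> S'" and u: "u \<in> S'" "u \<notin> sub_M"
  have o1: "ov 1 0 0 0 \<in> S'" "ov 0 0 1 0 \<in> S'" "ov 0 0 0 1 \<in> S'" using sub by (auto simp: mem_M)
  have finish: "S' = UNIV" if "ov 0 1 0 0 \<in> S'" by (rule odd_all[OF S two three o1(1) that o1(2) o1(3)])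
  have od: "ov (u (T X E)) (u (T Y E)) (u (T E X)) (u (T E Y)) \<in> S'" by (rule sa_odp[OF S u(1)])
  have od2: "ov (u (T X E)) 0 (u (T E X)) (u (T E Y)) \<in> S'" using sub by (auto simp: mem_M)
  have y1: "ov 0 (u (T Y E)) 0 0 \<in> S'"
    by (rule ov_memI[OF sa_ov_lin[OF S od od2, of 1 "-1"]]) simp_all
  have evp: "evv (u One) (u (T E E)) (u (T X X)) (u (T X Y)) (u (T Y X)) (u (T Y Y)) \<in> S'" by (rule sa_evp[OF S u(1)])
  have evp2: "evv (u One) (u (T E E)) (u (T X X)) (u (T X Y)) 0 0 \<in> S'" using sub by (auto simp: mem_M)
  have t: "evv 0 0 0 0 (u (T Y X)) (u (T Y Y)) \<in> S'"
    by (rule evv_memI[OF sa_evv_lin[OF S evp evp2, of 1 "-1"]]) simp_all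
  show "S' = UNIV"
  proof (cases "u (T Y E) = 0")
    case False
    show ?thesis apply (rule finish) using sa_ov_sc[OF S y1, of "1/u (T Y E)"] False by simp
  next
    case True
    hence "u (T Y X) \<noteq> 0 \<or> u (T Y Y) \<noteq> 0" using u(2) by (simp add: mem_M)
    have A: "ov 0 (- u (T Y Y)/2) 0 0 \<in> S'" using sa_mul[OF S t o1(2), unfolded mult_evv_ov] by simp
    have B: "ov 0 (u (T Y X)/2) 0 0 \<in> S'" using sa_mul[OF S t o1(3), unfolded mult_evv_ov] by simp
    show ?thesis
    proof (cases "u (T Y X) = 0")
      case True
      hence "u (T Y Y) \<noteq> 0" using \<open>u (T Y X) \<noteq> 0 \<or> u (T Y Y) \<noteq> 0\<close> by simp
      show ?thesis apply (rule finish) using sa_ov_sc[OF S A, of "-2/u (T Y Y)"] \<open>u (T Y Y) \<noteq> 0\<close> two by simp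
    next
      case False
      show ?thesis apply (rule finish) using sa_ov_sc[OF S B, of "2/u (T Y X)"] False two by simp
    qed
  qed
qed

lemma max_iv:
  assumes two: "(2::'a::field) \<noteq> 0" and three: "(3::'a) \<noteq> 0"
  shows "maximal_subalg (sub_iv :: 'a k10 set)"
proof (rule maxI[OF subalg_iv iv_ne])
  fix S' :: "'a k10 set" and u assume S: "subalg S'" and sub: "sub_iv \<subseteq> S'" and u: "u \<in> S'" "u \<notin> sub_iv"
  have o1: "ov 1 0 0 0 \<in> S'" "ov 0 0 0 1 \<in> S'" using sub by (auto simp: mem_iv)
  have e: "evv 0 0 1 0 0 0 \<in> S'" "evv 0 0 0 0 0 1 \<in> S'" using sub by (auto simp: mem_iv)
  have fromx: "S' = UNIV" if x: "ov 0 0 1 0 \<in> S'"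
  proof -
    have "ov 0 1 0 0 \<in> S'"
      using sa_ov_sc[OF S sa_mul[OF S e(2) x, unfolded mult_evv_ov], of "-2"] two by simp
    thus ?thesis by (rule odd_all[OF S two three o1(1) _ x o1(2)])
  qed
  have od: "ov (u (T X E)) (u (T Y E)) (u (T E X)) (u (T E Y)) \<in> S'" by (rule sa_odp[OF S u(1)])
  have od2: "ov (u (T X E)) 0 0 (u (T E Y)) \<in> S'" using sub by (auto simp: mem_iv)
  have w: "ov 0 (u (T Y E)) (u (T E X)) 0 \<in> S'"
    by (rule ov_memI[OF sa_ov_lin[OF S od od2, of 1 "-1"]]) simp_all
  have evp: "evv (u One) (u (T E E)) (u (T X X)) (u (T X Y)) (u (T Y X)) (u (T Y Y)) \<in> S'" by (rule sa_evp[OF S u(1)])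
  have evp2: "evv (u One) (u (T E E)) (u (T X X)) (u (T X Y)) 0 (u (T Y Y)) \<in> S'" using sub by (auto simp: mem_iv)
  have t: "evv 0 0 0 0 (u (T Y X)) 0 \<in> S'"
    by (rule evv_memI[OF sa_evv_lin[OF S evp evp2, of 1 "-1"]]) simp_all
  show "S' = UNIV"
  proof (cases "u (T Y X) = 0")
    case False
    have "ov 0 (u (T Y X)/2) 0 0 \<in> S'" using sa_mul[OF S t o1(2), unfolded mult_evv_ov] by simp
    hence y: "ov 0 1 0 0 \<in> S'" using sa_ov_sc[of S' 0 "u (T Y X)/2" 0 0 "2/u (T Y X)"] S False two by simp
    have "ov 0 0 (-1/2) 0 \<in> S'" using sa_mul[OF S e(1) y, unfolded mult_evv_ov] by simp
    hence "ov 0 0 1 0 \<in> S'" using sa_ov_sc[of S' 0 0 "-1/2" 0 "-2"] S two by simp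
    thus ?thesis by (rule fromx)
  next
    case True
    hence h: "u (T Y E) \<noteq> 0 \<or> u (T E X) \<noteq> 0" using u(2) by (auto simp: mem_iv)
    show ?thesis
    proof (cases "u (T Y E) = 0")
      case True
      hence "u (T E X) \<noteq> 0" using h u(2) by (auto simp: mem_iv)
      show ?thesis apply (rule fromx)
        using sa_ov_sc[OF S w, of "1/u (T E X)"] True \<open>u (T E X) \<noteq> 0\<close> by simp
    next
      case False
      have "ov 0 0 (- u (T Y E)/2) 0 \<in> S'" using sa_mul[OF S e(1) w, unfolded mult_evv_ov] by simp
      thus ?thesis using sa_ov_sc[of S' 0 0 "- u (T Y E)/2" 0 "-2/u (T Y E)"] S False two
        by (intro fromx) simp
    qed
  qed
qed

lemma phi_odd_gen:
  fixes S :: "'a::field k10 set"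
  assumes S: "subalg S" and two: "(2::'a) \<noteq> 0" and three: "(3::'a) \<noteq> 0"
    and xx: "ov 1 0 1 0 \<in> S" and yy: "ov 0 1 0 1 \<in> S"
    and r: "ov r1 r2 0 0 \<in> S" and rnz: "r1 \<noteq> 0 \<or> r2 \<noteq> 0"
  shows "S = UNIV"
proof -
  have fin: "S = UNIV" if x: "ov 1 0 0 0 \<in> S" and y: "ov 0 1 0 0 \<in> S"
  proof -
    have "ov 0 0 1 0 \<in> S" by (rule ov_memI[OF sa_ov_lin[OF S xx x, of 1 "-1"]]) simp_all
    moreover have "ov 0 0 0 1 \<in> S" by (rule ov_memI[OF sa_ov_lin[OF S yy y, of 1 "-1"]]) simp_all
    ultimately show ?thesis using odd_all[OF S two three x y] by blast
  qed
  show ?thesis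
  proof (cases "r2 = 0")
    case False
    have "ov r1 r2 0 0 \<in> S \<and> ov 0 0 0 0 \<in> S \<and> ov 1 0 0 0 \<in> S \<and> ov 0 0 1 0 \<in> S"
      by (rule Dlem[OF S two r xx]) (use False in simp)
    hence x: "ov 1 0 0 0 \<in> S" by simp
    have y: "ov 0 1 0 0 \<in> S"
      apply (rule ov_memI[OF sa_ov_lin[OF S r x, of "1/r2" "-r1/r2"]])
      using False by (simp_all add: field_simps)
    show ?thesis using fin x y by blast
  next
    case True
    hence r1: "r1 \<noteq> 0" using rnz by simp
    have "ov r1 r2 0 0 \<in> S \<and> ov 0 0 0 0 \<in> S \<and> ov 0 1 0 0 \<in> S \<and> ov 0 0 0 1 \<in> S"
      by (rule Dlem[OF S two r yy]) (use r1 True in simp)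
    hence y: "ov 0 1 0 0 \<in> S" by simp
    have "ov 1 0 0 0 \<in> S"
      using sa_ov_sc[OF S r, of "1/r1"] r1 True by simp
    thus ?thesis using fin y by blast
  qed
qed

lemma max_phi:
  assumes two: "(2::'a::field) \<noteq> 0" and three: "(3::'a) \<noteq> 0"
  shows "maximal_subalg (sub_phi :: 'a k10 set)"
proof (rule maxI[OF subalg_phi phi_ne])
  fix S' :: "'a k10 set" and u assume S: "subalg S'" and sub: "sub_phi \<subseteq> S'" and u: "u \<in> S'" "u \<notin> sub_phi"
  note mp = mem_phi[OF two]
  have insub: "v \<in> S'" if "v \<in> sub_phi" for v using sub that by blast
  have xx: "ov 1 0 1 0 \<in> S'" by (rule insub) (simp add: mp)
  have yy: "ov 0 1 0 1 \<in> S'" by (rule insub) (simp add: mp)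
  have oddcase: "S' = UNIV" if w: "ov p1 p2 q1 q2 \<in> S'" and ne: "p1 \<noteq> q1 \<or> p2 \<noteq> q2" for p1 p2 q1 q2
  proof -
    have w2: "ov q1 q2 q1 q2 \<in> S'" by (rule insub) (simp add: mp)
    have "ov (p1 - q1) (p2 - q2) 0 0 \<in> S'"
      by (rule ov_memI[OF sa_ov_lin[OF S w w2, of 1 "-1"]]) simp_all
    moreover have "p1 - q1 \<noteq> 0 \<or> p2 - q2 \<noteq> 0" using ne by simp
    ultimately show ?thesis using phi_odd_gen[OF S two three xx yy] by blast
  qed
  show "S' = UNIV"
  proof (cases "u (T X E) = u (T E X) \<and> u (T Y E) = u (T E Y)")
    case False
    thus ?thesis using oddcase[OF sa_odp[OF S u(1)]] by blast
  next
    case True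
    define A where "A = u (T X X)"
    define C where "C = u (T X Y) + u (T Y X)"
    define B where "B = u (T Y Y)"
    have h2: "A \<noteq> 0 \<or> C \<noteq> 0 \<or> B \<noteq> 0"
    proof (rule ccontr)
      assume "\<not> ?thesis"
      hence "u (T X X) = 0" "u (T Y Y) = 0" "u (T X Y) = - u (T Y X)"
        by (simp_all add: A_def B_def C_def eq_neg_iff_add_eq_0)
      thus False using u(2) True by (simp add: mp)
    qed
    have evp: "evv (u One) (u (T E E)) (u (T X X)) (u (T X Y)) (u (T Y X)) (u (T Y Y)) \<in> S'" by (rule sa_evp[OF S u(1)])
    have evp2: "evv (u One) (u (T E E)) 0 (- u (T Y X)) (u (T Y X)) 0 \<in> S'" by (rule insub) (simp add: mp)
    have t: "evv 0 0 A C 0 B \<in> S'"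
      by (rule evv_memI[OF sa_evv_lin[OF S evp evp2, of 1 "-1"]]) (simp_all add: A_def B_def C_def)
    have m1: "ov (-C/2) (-B/2) 0 (B/2) \<in> S'" using sa_mul[OF S t xx, unfolded mult_evv_ov] by simp
    have m2: "ov (A/2) 0 (-(A/2)) (-(C/2)) \<in> S'" using sa_mul[OF S t yy, unfolded mult_evv_ov] by simp
    show ?thesis
    proof (cases "B = 0 \<and> C = 0")
      case True
      hence "A \<noteq> 0" using h2 by simp
      hence "A/2 \<noteq> -(A/2)" using two by (simp add: field_simps)
      thus ?thesis using oddcase[OF m2] by blast
    next
      case False
      hence "-C/2 \<noteq> 0 \<or> -B/2 \<noteq> B/2" using two by (auto simp: field_simps)
      thus ?thesis using oddcase[OF m1] by blast
    qed
  qed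
qed
lemma Phi_coord:
  "Phi (g11,g12,g21,g22) (h11,h12,h21,h22) u (T X E) = g11 * u (T X E) + g12 * u (T Y E)"
  "Phi (g11,g12,g21,g22) (h11,h12,h21,h22) u (T Y E) = g21 * u (T X E) + g22 * u (T Y E)"
  "Phi (g11,g12,g21,g22) (h11,h12,h21,h22) u (T E X) = h11 * u (T E X) + h12 * u (T E Y)"
  "Phi (g11,g12,g21,g22) (h11,h12,h21,h22) u (T E Y) = h21 * u (T E X) + h22 * u (T E Y)"
  by (simp_all add: Phi_def)

lemma cls_iv:
  fixes S :: "'a::field k10 set"
  assumes S: "subalg S" and two: "(2::'a) \<noteq> 0"
    and hyp: "\<forall>u\<in>S. u (T E X) = 0 \<and> u (T Y E) = 0"
    and w: "w \<in> S" and nzw: "w (T X E) \<noteq> 0 \<or> w (T E Y) \<noteq> 0"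
  shows "S \<subseteq> sub_iv"
proof
  fix u assume u: "u \<in> S"
  have hw: "w (T E X) = 0" "w (T Y E) = 0" using hyp w by auto
  have m: "mult10 (evv (u One) (u (T E E)) (u (T X X)) (u (T X Y)) (u (T Y X)) (u (T Y Y)))
      (ov (w (T X E)) (w (T Y E)) (w (T E X)) (w (T E Y))) \<in> S"
    by (rule sa_mul[OF S sa_evp[OF S u] sa_odp[OF S w]])
  have "u (T Y X) * w (T X E) = 0 \<and> u (T Y X) * w (T E Y) = 0"
    using hyp m hw two unfolding mult_evv_ov by auto
  hence "u (T Y X) = 0" using nzw by auto
  thus "u \<in> sub_iv" using hyp u by (simp add: mem_iv)
qed

lemma cls_M:
  fixes S :: "'a::field k10 set"
  assumes S: "subalg S" and two: "(2::'a) \<noteq> 0"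
    and hyp: "\<forall>u\<in>S. u (T Y E) = 0"
    and w1: "w1 \<in> S" and w2: "w2 \<in> S"
    and det: "w1 (T E X) * w2 (T E Y) - w1 (T E Y) * w2 (T E X) \<noteq> 0"
  shows "S \<subseteq> sub_M"
proof
  fix u assume u: "u \<in> S"
  have eq: "w (T E Y) * u (T Y X) + (- w (T E X)) * u (T Y Y) = 0" if w: "w \<in> S" for w
  proof -
    have hw: "w (T Y E) = 0" using hyp w by auto
    have m: "mult10 (evv (u One) (u (T E E)) (u (T X X)) (u (T X Y)) (u (T Y X)) (u (T Y Y)))
        (ov (w (T X E)) (w (T Y E)) (w (T E X)) (w (T E Y))) \<in> S"
      by (rule sa_mul[OF S sa_evp[OF S u] sa_odp[OF S w]])
    have "(1/2) * (u (T Y X) * w (T E Y) - u (T Y Y) * w (T E X)) = 0"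
      using hyp m hw unfolding mult_evv_ov by auto
    thus ?thesis using two by (simp add: algebra_simps)
  qed
  have "u (T Y X) = 0 \<and> u (T Y Y) = 0"
    by (rule lin2[OF eq[OF w1] eq[OF w2]]) (use det in \<open>simp add: algebra_simps\<close>)
  thus "u \<in> sub_M" using hyp u by (simp add: mem_M)
qed

lemma cls_phi:
  fixes S :: "'a::field k10 set"
  assumes S: "subalg S" and two: "(2::'a) \<noteq> 0"
    and hyp: "\<forall>u\<in>S. u (T X E) = u (T E X) \<and> u (T Y E) = u (T E Y)"
    and w1: "w1 \<in> S" and w2: "w2 \<in> S"
    and det: "w1 (T X E) * w2 (T Y E) - w1 (T Y E) * w2 (T X E) \<noteq> 0"
  shows "S \<subseteq> sub_phi"
proof
  fix u assume u: "u \<in> S"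
  define t11 where "t11 = u (T X X)"
  define t12 where "t12 = u (T X Y)"
  define t21 where "t21 = u (T Y X)"
  define t22 where "t22 = u (T Y Y)"
  have eq: "w (T Y E) * (2*t11) + w (T X E) * (-(t12+t21)) = 0 \<and>
            w (T Y E) * (t12+t21) + w (T X E) * (-(2*t22)) = 0" if w: "w \<in> S" for w
  proof -
    have hw: "w (T E X) = w (T X E)" "w (T E Y) = w (T Y E)" using hyp w by auto
    have m: "mult10 (evv (u One) (u (T E E)) (u (T X X)) (u (T X Y)) (u (T Y X)) (u (T Y Y)))
        (ov (w (T X E)) (w (T Y E)) (w (T E X)) (w (T E Y))) \<in> S"
      by (rule sa_mul[OF S sa_evp[OF S u] sa_odp[OF S w]])
    have h: "(1/2) * (t11 * w (T Y E) - t12 * w (T X E)) = (1/2) * (t21 * w (T X E) - t11 * w (T Y E))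
      \<and> (1/2) * (t21 * w (T Y E) - t22 * w (T X E)) = (1/2) * (t22 * w (T X E) - t12 * w (T Y E))"
      using hyp m hw unfolding mult_evv_ov t11_def t12_def t21_def t22_def by auto
    have hh: "(1/2::'a) \<noteq> 0" using two by simp
    show ?thesis
    proof
      have "t11 * w (T Y E) - t12 * w (T X E) = t21 * w (T X E) - t11 * w (T Y E)" using conjunct1[OF h] mult_left_cancel[OF hh] by blast
      thus "w (T Y E) * (2*t11) + w (T X E) * (-(t12+t21)) = 0" by (simp add: algebra_simps)
      have "t21 * w (T Y E) - t22 * w (T X E) = t22 * w (T X E) - t12 * w (T Y E)" using conjunct2[OF h] mult_left_cancel[OF hh] by blast
      thus "w (T Y E) * (t12+t21) + w (T X E) * (-(2*t22)) = 0" by (simp add: algebra_simps)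
    qed
  qed
  have det': "w1 (T Y E) * w2 (T X E) - w1 (T X E) * w2 (T Y E) \<noteq> 0" using det by (simp add: algebra_simps)
  have A: "2*t11 = 0 \<and> -(t12+t21) = 0"
    using lin2[OF conjunct1[OF eq[OF w1]] conjunct1[OF eq[OF w2]] det'] .
  have B: "t12+t21 = 0 \<and> -(2*t22) = 0"
    using lin2[OF conjunct2[OF eq[OF w1]] conjunct2[OF eq[OF w2]] det'] .
  have "t11 = 0" "t22 = 0" "t12 = - t21" using A B two by (auto simp: eq_neg_iff_add_eq_0)
  thus "u \<in> sub_phi" using hyp u two by (simp add: mem_phi t11_def t12_def t21_def t22_def)
qed

lemma transport:
  assumes dg: "g11*g22 - g12*g21 = (1::'a::field)" and dh: "h11*h22 - h12*h21 = 1"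
    and h: "\<forall>u\<in>S. Phi (g11,g12,g21,g22) (h11,h12,h21,h22) u \<in> A"
  shows "\<exists>f. aut10 f \<and> S \<subseteq> f ` A"
proof (intro exI conjI)
  let ?f = "Phi (g22,-g12,-g21,g11) (h22,-h12,-h21,h11)"
  have d1: "g22*g11 - (-g12)*(-g21) = 1" "h22*h11 - (-h12)*(-h21) = 1" using dg dh by (simp_all add: algebra_simps)
  show "aut10 ?f" by (rule aut_Phi[OF d1])
  show "S \<subseteq> ?f ` A"
  proof
    fix u assume "u \<in> S"
    hence "Phi (g11,g12,g21,g22) (h11,h12,h21,h22) u \<in> A" using h by blast
    moreover have "?f (Phi (g11,g12,g21,g22) (h11,h12,h21,h22) u) = u"
      using Phi_inv[OF d1, of u] by simp
    ultimately show "u \<in> ?f ` A" by (metis image_eqI)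
  qed
qed

lemma choose_dir:
  fixes S :: "'a::field k10 set"
  assumes "\<forall>u\<in>S. \<forall>v\<in>S. u i * v j - u j * v i = 0"
  shows "\<exists>a1 a2. (a1 \<noteq> 0 \<or> a2 \<noteq> 0) \<and> (\<forall>u\<in>S. a1 * u j - a2 * u i = 0)"
proof (cases "\<exists>w\<in>S. w i \<noteq> 0 \<or> w j \<noteq> 0")
  case True
  then obtain w where w: "w \<in> S" "w i \<noteq> 0 \<or> w j \<noteq> 0" by blast
  show ?thesis using assms w by (intro exI[of _ "w i"] exI[of _ "w j"]) auto
next
  case False
  show ?thesis using False by (intro exI[of _ 1] exI[of _ 0]) auto
qed

lemma solve_row:
  assumes "a1 \<noteq> 0 \<or> a2 \<noteq> (0::'a::field)"
  shows "\<exists>g1 g2. g1 * a1 + g2 * a2 = 1"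
proof (cases "a1 = 0")
  case True thus ?thesis using assms by (intro exI[of _ 0] exI[of _ "1/a2"]) simp
next
  case False thus ?thesis by (intro exI[of _ "1/a1"] exI[of _ 0]) simp
qed

lemma case_iv:
  fixes S :: "'a::field k10 set"
  assumes S: "subalg S" and two: "(2::'a) \<noteq> 0"
    and Pd: "\<forall>u\<in>S. \<forall>v\<in>S. u (T X E) * v (T Y E) - u (T Y E) * v (T X E) = 0"
    and Qd: "\<forall>u\<in>S. \<forall>v\<in>S. u (T E X) * v (T E Y) - u (T E Y) * v (T E X) = 0"
    and w: "w \<in> S" and nzw: "w (T X E) \<noteq> 0 \<or> w (T Y E) \<noteq> 0 \<or> w (T E X) \<noteq> 0 \<or> w (T E Y) \<noteq> 0"
  shows "\<exists>f. aut10 f \<and> S \<subseteq> f ` sub_iv"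
proof -
  obtain a1 a2 where a: "a1 \<noteq> 0 \<or> a2 \<noteq> 0" "\<forall>u\<in>S. a1 * u (T Y E) - a2 * u (T X E) = 0"
    using choose_dir[OF Pd] by blast
  obtain b1 b2 where b: "b1 \<noteq> 0 \<or> b2 \<noteq> 0" "\<forall>u\<in>S. b1 * u (T E Y) - b2 * u (T E X) = 0"
    using choose_dir[OF Qd] by blast
  obtain g11 g12 where g: "g11 * a1 + g12 * a2 = 1" using solve_row[OF a(1)] by blast
  obtain h21 h22 where h: "h21 * b1 + h22 * b2 = 1" using solve_row[OF b(1)] by blast
  have dg: "g11 * a1 - g12 * (-a2) = 1" using g by simp
  have dh: "b2 * h22 - (-b1) * h21 = 1" using h by (simp add: algebra_simps)
  let ?g = "Phi (g11, g12, -a2, a1) (b2, -b1, h21, h22)"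
  have ag: "aut10 ?g" by (rule aut_Phi[OF dg dh])
  have S': "subalg (?g ` S)" by (rule aut_subalg[OF ag S])
  have hyp: "\<forall>u\<in>?g ` S. u (T E X) = 0 \<and> u (T Y E) = 0"
  proof
    fix u' assume "u' \<in> ?g ` S"
    then obtain u where u: "u \<in> S" "u' = ?g u" by blast
    show "u' (T E X) = 0 \<and> u' (T Y E) = 0"
      using a(2) b(2) u by (auto simp: Phi_coord algebra_simps)
  qed
  have nz': "?g w (T X E) \<noteq> 0 \<or> ?g w (T E Y) \<noteq> 0"
  proof (rule ccontr)
    assume c: "\<not> ?thesis"
    have z: "?g w (T X E) = 0" "?g w (T Y E) = 0" "?g w (T E X) = 0" "?g w (T E Y) = 0"
      using c hyp w by auto
    have d1: "a1 * g11 - (- g12) * a2 = 1" "h22 * b2 - b1 * (-h21) = 1" using g h by (simp_all add: algebra_simps)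
    have inv: "Phi (a1, -g12, a2, g11) (h22, b1, -h21, b2) (?g w) = w"
      using Phi_inv[OF d1, of w] by simp
    have "w (T X E) = 0 \<and> w (T Y E) = 0 \<and> w (T E X) = 0 \<and> w (T E Y) = 0"
      using z by (subst (1 2 3 4) inv[symmetric]) (simp add: Phi_coord)
    thus False using nzw by simp
  qed
  have "?g ` S \<subseteq> sub_iv" by (rule cls_iv[OF S' two hyp _ nz']) (use w in blast)
  hence "\<forall>u\<in>S. ?g u \<in> sub_iv" by blast
  thus ?thesis by (rule transport[OF dg dh])
qed
lemma case_M:
  fixes S :: "'a::field k10 set"
  assumes S: "subalg S" and two: "(2::'a) \<noteq> 0"
    and Pd: "\<forall>u\<in>S. \<forall>v\<in>S. u (T X E) * v (T Y E) - u (T Y E) * v (T X E) = 0"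
    and w1: "w1 \<in> S" and w2: "w2 \<in> S"
    and det: "w1 (T E X) * w2 (T E Y) - w1 (T E Y) * w2 (T E X) \<noteq> 0"
  shows "\<exists>f. aut10 f \<and> S \<subseteq> f ` sub_M"
proof -
  obtain a1 a2 where a: "a1 \<noteq> 0 \<or> a2 \<noteq> 0" "\<forall>u\<in>S. a1 * u (T Y E) - a2 * u (T X E) = 0"
    using choose_dir[OF Pd] by blast
  obtain g11 g12 where g: "g11 * a1 + g12 * a2 = 1" using solve_row[OF a(1)] by blast
  have dg: "g11 * a1 - g12 * (-a2) = 1" using g by simp
  have dh: "1 * 1 - 0 * 0 = (1::'a)" by simp
  let ?g = "Phi (g11, g12, -a2, a1) (1, 0, 0, 1)"
  have ag: "aut10 ?g" by (rule aut_Phi[OF dg dh])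
  have S': "subalg (?g ` S)" by (rule aut_subalg[OF ag S])
  have hyp: "\<forall>u\<in>?g ` S. u (T Y E) = 0"
  proof
    fix u' assume "u' \<in> ?g ` S"
    then obtain u where u: "u \<in> S" "u' = ?g u" by blast
    show "u' (T Y E) = 0" using a(2) u by (auto simp: Phi_coord algebra_simps)
  qed
  have det': "?g w1 (T E X) * ?g w2 (T E Y) - ?g w1 (T E Y) * ?g w2 (T E X) \<noteq> 0"
    using det by (simp add: Phi_coord)
  have "?g ` S \<subseteq> sub_M" by (rule cls_M[OF S' two hyp _ _ det']) (use w1 w2 in blast)+
  hence "\<forall>u\<in>S. ?g u \<in> sub_M" by blast
  thus ?thesis by (rule transport[OF dg dh])
qed

lemma phi_coord: "phi10 u (T X E) = u (T E X)" "phi10 u (T Y E) = u (T E Y)"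
  "phi10 u (T E X) = u (T X E)" "phi10 u (T E Y) = u (T Y E)"
  by (simp_all add: phi10_def)

lemma case_M':
  fixes S :: "'a::field k10 set"
  assumes S: "subalg S" and two: "(2::'a) \<noteq> 0"
    and Qd: "\<forall>u\<in>S. \<forall>v\<in>S. u (T E X) * v (T E Y) - u (T E Y) * v (T E X) = 0"
    and w1: "w1 \<in> S" and w2: "w2 \<in> S"
    and det: "w1 (T X E) * w2 (T Y E) - w1 (T Y E) * w2 (T X E) \<noteq> 0"
  shows "\<exists>f. aut10 f \<and> S \<subseteq> f ` sub_M"
proof -
  have S': "subalg (phi10 ` S)" by (rule aut_subalg[OF aut_phi S])
  have Pd: "\<forall>u\<in>phi10 ` S. \<forall>v\<in>phi10 ` S. u (T X E) * v (T Y E) - u (T Y E) * v (T X E) = 0"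
    using Qd by (auto simp: phi_coord)
  obtain f where f: "aut10 f" "phi10 ` S \<subseteq> f ` sub_M"
    using case_M[OF S' two Pd imageI[OF w1] imageI[OF w2]] det by (auto simp: phi_coord)
  show ?thesis
  proof (intro exI conjI)
    show "aut10 (phi10 \<circ> f)" by (rule aut_comp[OF aut_phi f(1)])
    show "S \<subseteq> (phi10 \<circ> f) ` sub_M"
    proof
      fix u assume "u \<in> S"
      then obtain v where v: "v \<in> sub_M" "phi10 u = f v" using f(2) by blast
      hence "u = (phi10 \<circ> f) v" using phi_phi[of u] by simp
      thus "u \<in> (phi10 \<circ> f) ` sub_M" using v(1) by blast
    qed
  qed
qed

lemma adjG:
  fixes a b c d e :: "'a::field"
  assumes ne: "e \<noteq> 0" and h: "a*d - b*c = e"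
  shows "d/e * a - (-c/e) * (-b) = 1" "d/e*a + (-c/e)*b = 1" "(-b)*a + a*b = 0"
    "d/e*c + (-c/e)*d = 0" "(-b)*c + a*d = e"
proof -
  have 1: "d/e*a + (-c/e)*b = (a*d - b*c)/e" using ne by (simp add: field_simps)
  show "d/e*a + (-c/e)*b = 1" unfolding 1 h using ne by simp
  thus "d/e * a - (-c/e) * (-b) = 1" by simp
  show "(-b)*a + a*b = 0" by simp
  show "d/e*c + (-c/e)*d = 0" using ne by (simp add: field_simps)
  show "(-b)*c + a*d = e" using h by (simp add: algebra_simps)
qed

lemma case_phi:
  fixes S :: "'a::field k10 set"
  assumes S: "subalg S" and two: "(2::'a) \<noteq> 0" and three: "(3::'a) \<noteq> 0" and ne: "S \<noteq> UNIV"
    and w1: "w1 \<in> S" and w2: "w2 \<in> S"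
    and detP: "w1 (T X E) * w2 (T Y E) - w1 (T Y E) * w2 (T X E) \<noteq> 0"
    and w3: "w3 \<in> S" and w4: "w4 \<in> S"
    and detQ: "w3 (T E X) * w4 (T E Y) - w3 (T E Y) * w4 (T E X) \<noteq> 0"
  shows "\<exists>f. aut10 f \<and> S \<subseteq> f ` sub_phi"
proof -
  define p11 where "p11 = w1 (T X E)"
  define p12 where "p12 = w1 (T Y E)"
  define q11 where "q11 = w1 (T E X)"
  define q12 where "q12 = w1 (T E Y)"
  define p21 where "p21 = w2 (T X E)"
  define p22 where "p22 = w2 (T Y E)"
  define q21 where "q21 = w2 (T E X)"
  define q22 where "q22 = w2 (T E Y)"
  have o1: "ov p11 p12 q11 q12 \<in> S" unfolding p11_def p12_def q11_def q12_def by (rule sa_odp[OF S w1])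
  have o2: "ov p21 p22 q21 q22 \<in> S" unfolding p21_def p22_def q21_def q22_def by (rule sa_odp[OF S w2])
  define e where "e = p11*p22 - p12*p21"
  define d where "d = q11*q22 - q12*q21"
  have e: "e \<noteq> 0" using detP by (simp add: e_def p11_def p12_def p21_def p22_def)
  show ?thesis
  proof (cases "e = d")
    case False
    have D: "ov p11 p12 0 0 \<in> S \<and> ov 0 0 q11 q12 \<in> S \<and> ov p21 p22 0 0 \<in> S \<and> ov 0 0 q21 q22 \<in> S"
      by (rule Dlem[OF S two o1 o2]) (use False in \<open>simp add: e_def d_def\<close>)
    have xy: "ov 1 0 0 0 \<in> S \<and> ov 0 1 0 0 \<in> S"
      using cramerP[OF S conjunct1[OF D] conjunct1[OF conjunct2[OF conjunct2[OF D]]]] e by (simp add: e_def)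
    have qpart: "ov 0 0 (w (T E X)) (w (T E Y)) \<in> S" if w: "w \<in> S" for w
    proof -
      have a: "ov (w (T X E)) (w (T Y E)) (w (T E X)) (w (T E Y)) \<in> S" by (rule sa_odp[OF S w])
      have b: "ov (w (T X E)) (w (T Y E)) 0 0 \<in> S"
        by (rule ov_memI[OF sa_ov_lin[OF S conjunct1[OF xy] conjunct2[OF xy], of "w (T X E)" "w (T Y E)"]]) simp_all
      show ?thesis by (rule ov_memI[OF sa_ov_lin[OF S a b, of 1 "-1"]]) simp_all
    qed
    have zq: "ov 0 0 1 0 \<in> S \<and> ov 0 0 0 1 \<in> S"
      by (rule cramerQ[OF S qpart[OF w3] qpart[OF w4] detQ])
    have "S = UNIV" using odd_all[OF S two three] xy zq by blast
    thus ?thesis using ne by simp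
  next
    case True
    let ?G = "(p22/e, -p21/e, -p12, p11)"
    let ?H = "(q22/e, -q21/e, -q12, q11)"
    have hp: "p11*p22 - p12*p21 = e" by (simp add: e_def)
    have hq: "q11*q22 - q12*q21 = e" by (simp add: True d_def)
    note AP = adjG[OF e hp] and AQ = adjG[OF e hq]
    have dg: "p22/e * p11 - (-p21/e) * (-p12) = 1" by (rule AP(1))
    have dh: "q22/e * q11 - (-q21/e) * (-q12) = 1" by (rule AQ(1))
    let ?g = "Phi ?G ?H"
    have ag: "aut10 ?g" by (rule aut_Phi[OF dg dh])
    have S': "subalg (?g ` S)" by (rule aut_subalg[OF ag S])
    have ne': "?g ` S \<noteq> UNIV" using aut_univ[OF ag] ne by simp
    have xx: "ov 1 0 1 0 \<in> ?g ` S"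
    proof -
      have "?g (ov p11 p12 q11 q12) = ov 1 0 1 0"
        unfolding Phi_ov ov_eq_iff using AP AQ by simp
      thus ?thesis using o1 by (metis image_eqI)
    qed
    have yy0: "ov 0 e 0 e \<in> ?g ` S"
    proof -
      have "?g (ov p21 p22 q21 q22) = ov 0 e 0 e"
        unfolding Phi_ov ov_eq_iff using AP AQ by simp
      thus ?thesis using o2 by (metis image_eqI)
    qed
    have yy: "ov 0 1 0 1 \<in> ?g ` S" using sa_ov_sc[OF S' yy0, of "1/e"] e by simp
    have hyp: "\<forall>u\<in>?g ` S. u (T X E) = u (T E X) \<and> u (T Y E) = u (T E Y)"
    proof (rule ballI, rule ccontr)
      fix u assume u: "u \<in> ?g ` S" and c: "\<not> (u (T X E) = u (T E X) \<and> u (T Y E) = u (T E Y))"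
      have a: "ov (u (T X E)) (u (T Y E)) (u (T E X)) (u (T E Y)) \<in> ?g ` S" by (rule sa_odp[OF S' u])
      have b: "ov (u (T E X)) (u (T E Y)) (u (T E X)) (u (T E Y)) \<in> ?g ` S"
        by (rule ov_memI[OF sa_ov_lin[OF S' xx yy, of "u (T E X)" "u (T E Y)"]]) simp_all
      have r: "ov (u (T X E) - u (T E X)) (u (T Y E) - u (T E Y)) 0 0 \<in> ?g ` S"
        by (rule ov_memI[OF sa_ov_lin[OF S' a b, of 1 "-1"]]) simp_all
      have "?g ` S = UNIV"
        by (rule phi_odd_gen[OF S' two three xx yy r]) (use c in auto)
      thus False using ne' by simp
    qed
    have "?g ` S \<subseteq> sub_phi" by (rule cls_phi[OF S' two hyp xx yy]) simp
    hence "\<forall>u\<in>S. ?g u \<in> sub_phi" by blast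
    thus ?thesis by (rule transport[OF dg dh])
  qed
qed

lemma classify:
  fixes S :: "'a::field k10 set"
  assumes S: "subalg S" and ne: "S \<noteq> UNIV" and two: "(2::'a) \<noteq> 0" and three: "(3::'a) \<noteq> 0"
  shows "\<exists>f. aut10 f \<and> (S \<subseteq> f ` sub_even \<or> S \<subseteq> f ` sub_phi \<or> S \<subseteq> f ` sub_M \<or> S \<subseteq> f ` sub_iv)"
proof (cases "\<exists>w\<in>S. w (T X E) \<noteq> 0 \<or> w (T Y E) \<noteq> 0 \<or> w (T E X) \<noteq> 0 \<or> w (T E Y) \<noteq> 0")
  case False
  hence "S \<subseteq> id ` sub_even" by (auto simp: mem_even)
  thus ?thesis using aut_id by blast
next
  case True
  then obtain w where w: "w \<in> S" "w (T X E) \<noteq> 0 \<or> w (T Y E) \<noteq> 0 \<or> w (T E X) \<noteq> 0 \<or> w (T E Y) \<noteq> 0" by blast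
  show ?thesis
  proof (cases "\<forall>u\<in>S. \<forall>v\<in>S. u (T X E) * v (T Y E) - u (T Y E) * v (T X E) = 0")
    case Pd: True
    show ?thesis
    proof (cases "\<forall>u\<in>S. \<forall>v\<in>S. u (T E X) * v (T E Y) - u (T E Y) * v (T E X) = 0")
      case True
      thus ?thesis using case_iv[OF S two Pd True w] by blast
    next
      case False
      then obtain w1 w2 where "w1 \<in> S" "w2 \<in> S" "w1 (T E X) * w2 (T E Y) - w1 (T E Y) * w2 (T E X) \<noteq> 0" by blast
      thus ?thesis using case_M[OF S two Pd] by blast
    qed
  next
    case nPd: False
    then obtain w1 w2 where w12: "w1 \<in> S" "w2 \<in> S" "w1 (T X E) * w2 (T Y E) - w1 (T Y E) * w2 (T X E) \<noteq> 0" by blast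
    show ?thesis
    proof (cases "\<forall>u\<in>S. \<forall>v\<in>S. u (T E X) * v (T E Y) - u (T E Y) * v (T E X) = 0")
      case True
      thus ?thesis using case_M'[OF S two True w12] by blast
    next
      case False
      then obtain w3 w4 where "w3 \<in> S" "w4 \<in> S" "w3 (T E X) * w4 (T E Y) - w3 (T E Y) * w4 (T E X) \<noteq> 0" by blast
      thus ?thesis using case_phi[OF S two three ne w12] by blast
    qed
  qed
qed
theorem corollary4p2:
  fixes S :: "'a::field k10 set"
  assumes "alg_closed TYPE('a)" and "(2::'a) \<noteq> 0" and "(3::'a) \<noteq> 0"
  shows "maximal_subalg S \<longleftrightarrow>
    (\<exists>f. aut10 f \<and> (S = f ` sub_even \<or> S = f ` sub_phi \<or> S = f ` sub_M \<or> S = f ` sub_iv))"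
proof
  assume M: "maximal_subalg S"
  have S: "subalg S" "S \<noteq> UNIV" using M by (auto simp: maximal_subalg_def)
  obtain f where f: "aut10 f" and c: "S \<subseteq> f ` sub_even \<or> S \<subseteq> f ` sub_phi \<or> S \<subseteq> f ` sub_M \<or> S \<subseteq> f ` sub_iv"
    using classify[OF S assms(2) assms(3)] by blast
  have eq: "f ` A = S" if A: "subalg A" "A \<noteq> UNIV" and sub: "S \<subseteq> f ` A" for A
  proof -
    have "subalg (f ` A)" by (rule aut_subalg[OF f A(1)])
    moreover have "f ` A \<noteq> UNIV" using aut_univ[OF f] A(2) by simp
    ultimately show ?thesis using M sub by (auto simp: maximal_subalg_def)
  qed
  show "\<exists>f. aut10 f \<and> (S = f ` sub_even \<or> S = f ` sub_phi \<or> S = f ` sub_M \<or> S = f ` sub_iv)"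
    using c eq[OF subalg_even even_ne] eq[OF subalg_phi phi_ne] eq[OF subalg_M M_ne] eq[OF subalg_iv iv_ne] f
    by metis
next
  assume "\<exists>f. aut10 f \<and> (S = f ` sub_even \<or> S = f ` sub_phi \<or> S = f ` sub_M \<or> S = f ` sub_iv)"
  then obtain f where f: "aut10 f" and c: "S = f ` sub_even \<or> S = f ` sub_phi \<or> S = f ` sub_M \<or> S = f ` sub_iv" by blast
  show "maximal_subalg S"
    using c aut_maximal[OF f max_even[OF assms(2,3)]] aut_maximal[OF f max_phi[OF assms(2,3)]]
      aut_maximal[OF f max_M[OF assms(2,3)]] aut_maximal[OF f max_iv[OF assms(2,3)]] by blast
qed

end
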